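(* Let $1\le N\le M$ and let $u_1,\dots,u_N$ satisfy the genericity conditions: pairwise distinct, $au_j+b\neq0$, $eu_j+f\neq0$, $tu_j\neq u_k$ for $j\neq k$. Let $\mathcal{C}_N^{(1)},\dots,\mathcal{C}_N^{(N)}$ be any $2^N\times2^N$ matrices with $\sum_j\mathcal{C}_N^{(j)}=\mathcal{C}_N$ satisfying, for all $j$ and $k\neq j$, $\mathcal{C}_N^{(j)}\mathcal{A}_N=\frac{eu_j+f}{au_j+b}\mathcal{A}_N\mathcal{C}_N^{(j)}$, $(\mathcal{C}_N^{(j)})^2=0$, $\mathcal{C}_N^{(j)}\mathcal{C}_N^{(k)}=\frac{(eu_j+f)(au_k+b)(u_j-tu_k)}{(au_j+b)(eu_k+f)(tu_j-u_k)}\mathcal{C}_N^{(k)}\mathcal{C}_N^{(j)}$ (such matrices exist). Set \[K=\prod_{j=1}^N\Big(\frac{au_j+b}{eu_j+f}\Big)^j\,\mathrm{Tr}\big[Q\,\mathcal{A}_N^{M-N}\mathcal{C}_N^{(N)}\cdots\mathcal{C}_N^{(1)}\big].\] Then for every particle configuration $1\le x_1<\dots<x_N\le M$, \[\langle x_1\cdots x_N|B(u_N)\cdots B(u_1)|\Omega\rangle=K\sum_{\sigma\in S_N}\prod_{(j,k)\in\mathrm{Inv}(\sigma)}\frac{u_{\sigma(k)}-tu_{\sigma(j)}}{tu_{\sigma(k)}-u_{\sigma(j)}}\prod_{j=1}^N\Big(\frac{eu_{\sigma(j)}+f}{au_{\sigma(j)}+b}\Big)^{x_j}.\]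
   Context: Fix complex parameters $t,a,b,c,d,e,f$, all nonzero, with $t\neq1$, satisfying $cd+af=0$ and $tcd+be=0$. The $L$-operator $L_{aj}(u)$ on $W_a\otimes V_j$ ($W_a\cong V_j\cong\mathbb{C}^2$ with basis $|0\rangle,|1\rangle$) has matrix elements $[L(u)]^{\gamma\delta}_{\alpha\beta}={}_a\langle\gamma|{}_j\langle\delta|L_{aj}(u)|\alpha\rangle_a|\beta\rangle_j$: $[L]^{00}_{00}=au+b$, $[L]^{01}_{01}=atu+b$, $[L]^{01}_{10}=(1-t)cu$, $[L]^{10}_{01}=(1-t)d$, $[L]^{10}_{10}=eu+f$, $[L]^{11}_{11}=eu+tf$, all others $0$. Monodromy $T_a(u)=L_{aM}(u)\cdots L_{a1}(u)$, $B(u)={}_a\langle0|T_a(u)|1\rangle_a$. $|\Omega\rangle=|0\rangle^{\otimes M}$; $|x_1\cdots x_N\rangle$ has $|1\rangle$ at sites $x_j$ and $|0\rangle$ elsewhere; bras are duals. For $\sigma\in S_N$, $\mathrm{Inv}(\sigma)=\{(j,k):j<k,\ \sigma(j)>\sigma(k)\}$. $X\otimes Y$ is the Kronecker product $(X_{ik}Y)_{i,k}$. The matrices $\mathcal{A}_n,\mathcal{C}_n$ are defined by $\mathcal{A}_1=\mathrm{diag}(au_1+b,eu_1+f)$, $\mathcal{C}_1=\begin{pmatrix}0&(1-t)cu_1\\0&0\end{pmatrix}$, $\mathcal{A}_{n+1}=\mathrm{diag}(au_{n+1}+b,eu_{n+1}+f)\otimes\mathcal{A}_n+\begin{pmatrix}0&0\\(1-t)d&0\end{pmatrix}\otimes\mathcal{C}_n$,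 $\mathcal{C}_{n+1}=\begin{pmatrix}0&(1-t)cu_{n+1}\\0&0\end{pmatrix}\otimes\mathcal{A}_n+\mathrm{diag}(atu_{n+1}+b,eu_{n+1}+tf)\otimes\mathcal{C}_n$. Rows/columns of $2^N\times 2^N$ matrices are indexed by $(i_N,\dots,i_1)\in\{0,1\}^N$ consistent with this Kronecker structure (index $0$ first in each factor); $Q$ is the $2^N\times2^N$ matrix with a single entry $1$ in row $(1,\dots,1)$, column $(0,\dots,0)$, and zeros elsewhere (i.e. $Q=|1^N\rangle\langle0^N|$). *)

theory Defs
  imports "Jordan_Normal_Form.Matrix" "HOL-Combinatorics.Permutations" Complex_Main
begin

text \<open>Lel t a b c d e f u g h al be  is  [L(u)]^{g h}_{al be}: auxiliary in-state al, out-state g;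
 physical in-state be, out-state h.\<close>
definition Lel :: "complex \<Rightarrow> complex \<Rightarrow> complex \<Rightarrow> complex \<Rightarrow> complex \<Rightarrow> complex \<Rightarrow> complex
   \<Rightarrow> complex \<Rightarrow> nat \<Rightarrow> nat \<Rightarrow> nat \<Rightarrow> nat \<Rightarrow> complex" where
  "Lel t a b c d e f u g h al be =
     (if (g, h, al, be) = (0, 0, 0, 0) then a * u + b
      else if (g, h, al, be) = (0, 1, 0, 1) then a * t * u + b
      else if (g, h, al, be) = (0, 1, 1, 0) then (1 - t) * c * u
      else if (g, h, al, be) = (1, 0, 0, 1) then (1 - t) * d
      else if (g, h, al, be) = (1, 0, 1, 0) then e * u + f
      else if (g, h, al, be) = (1, 1, 1, 1) then e * u + t * f
      else 0)"

text \<open>Matrix elements of the monodromy T_a(u) = L_{a m}(u) ... L_{a 1}(u) on sites 1..m: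
 mono ... m g al dl bl = <g|_a <dl| T_a(u) |al>_a |bl>, where physical configurations
 dl, bl : nat => nat give the state (0 or 1) at each site 1..m.\<close>
fun mono :: "complex \<Rightarrow> complex \<Rightarrow> complex \<Rightarrow> complex \<Rightarrow> complex \<Rightarrow> complex \<Rightarrow> complex
   \<Rightarrow> complex \<Rightarrow> nat \<Rightarrow> nat \<Rightarrow> nat \<Rightarrow> (nat \<Rightarrow> nat) \<Rightarrow> (nat \<Rightarrow> nat) \<Rightarrow> complex" where
  "mono t a b c d e f u 0 g al dl bl = (if g = al then 1 else 0)"
| "mono t a b c d e f u (Suc m) g al dl bl =
     (\<Sum>s\<in>{0, 1}. Lel t a b c d e f u g (dl (Suc m)) s (bl (Suc m)) * mono t a b c d e f u m s al dl bl)"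

text \<open>Basis configurations of (C^2)^{\<otimes> M}: functions on sites {1..M} with values in {0,1}.\<close>
definition configs :: "nat \<Rightarrow> (nat \<Rightarrow> nat) set" where
  "configs M = PiE {1..M} (\<lambda>_. {0, 1})"

definition cfg :: "nat \<Rightarrow> nat set \<Rightarrow> (nat \<Rightarrow> nat)" where
  "cfg M X = (\<lambda>i\<in>{1..M}. if i \<in> X then 1 else 0)"

text \<open>Vectors are coefficient functions on configurations; B(u) = <0|T_a(u)|1>_a acting on them.\<close>
definition Bop :: "complex \<Rightarrow> complex \<Rightarrow> complex \<Rightarrow> complex \<Rightarrow> complex \<Rightarrow> complex \<Rightarrow> complex
   \<Rightarrow> nat \<Rightarrow> complex \<Rightarrow> ((nat \<Rightarrow> nat) \<Rightarrow> complex) \<Rightarrow> ((nat \<Rightarrow> nat) \<Rightarrow> complex)" where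
  "Bop t a b c d e f M u v = (\<lambda>dl. \<Sum>bl\<in>configs M. mono t a b c d e f u M 0 1 dl bl * v bl)"

definition Omega :: "nat \<Rightarrow> ((nat \<Rightarrow> nat) \<Rightarrow> complex)" where
  "Omega M = (\<lambda>bl. if bl = cfg M {} then 1 else 0)"

fun Bstate :: "complex \<Rightarrow> complex \<Rightarrow> complex \<Rightarrow> complex \<Rightarrow> complex \<Rightarrow> complex \<Rightarrow> complex
   \<Rightarrow> nat \<Rightarrow> (nat \<Rightarrow> complex) \<Rightarrow> nat \<Rightarrow> ((nat \<Rightarrow> nat) \<Rightarrow> complex)" where
  "Bstate t a b c d e f M u 0 = Omega M"
| "Bstate t a b c d e f M u (Suc n) = Bop t a b c d e f M (u (Suc n)) (Bstate t a b c d e f M u n)"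

definition kron :: "'a :: times mat \<Rightarrow> 'a mat \<Rightarrow> 'a mat" where
  "kron X Y = mat (dim_row X * dim_row Y) (dim_col X * dim_col Y)
     (\<lambda>(i, j). X $$ (i div dim_row Y, j div dim_col Y) * Y $$ (i mod dim_row Y, j mod dim_col Y))"

definition diag2 :: "complex \<Rightarrow> complex \<Rightarrow> complex mat" where
  "diag2 x y = mat_of_rows_list 2 [[x, 0], [0, y]]"

definition upper2 :: "complex \<Rightarrow> complex mat" where
  "upper2 x = mat_of_rows_list 2 [[0, x], [0, 0]]"

definition lower2 :: "complex \<Rightarrow> complex mat" where
  "lower2 x = mat_of_rows_list 2 [[0, 0], [x, 0]]"

text \<open>AC ... n = (A_n, C_n) for n \<ge> 1 (the value at n = 0 is irrelevant).\<close>
fun AC :: "complex \<Rightarrow> complex \<Rightarrow> complex \<Rightarrow> complex \<Rightarrow> complex \<Rightarrow> complex \<Rightarrow> complex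
   \<Rightarrow> (nat \<Rightarrow> complex) \<Rightarrow> nat \<Rightarrow> complex mat \<times> complex mat" where
  "AC t a b c d e f u 0 = (1\<^sub>m 1, 0\<^sub>m 1 1)"
| "AC t a b c d e f u (Suc 0) =
     (diag2 (a * u 1 + b) (e * u 1 + f), upper2 ((1 - t) * c * u 1))"
| "AC t a b c d e f u (Suc (Suc n)) =
     (let An = fst (AC t a b c d e f u (Suc n)); Cn = snd (AC t a b c d e f u (Suc n)) in
      (kron (diag2 (a * u (Suc (Suc n)) + b) (e * u (Suc (Suc n)) + f)) An
         + kron (lower2 ((1 - t) * d)) Cn,
       kron (upper2 ((1 - t) * c * u (Suc (Suc n)))) An
         + kron (diag2 (a * t * u (Suc (Suc n)) + b) (e * u (Suc (Suc n)) + t * f)) Cn))"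

text \<open>Row/column index (i_N,...,i_1) corresponds to the number sum_k i_k 2^(k-1), matching kron.
 Q = |1^N><0^N|.\<close>
definition Qmat :: "nat \<Rightarrow> complex mat" where
  "Qmat N = mat (2 ^ N) (2 ^ N) (\<lambda>(i, j). if i = 2 ^ N - 1 \<and> j = 0 then 1 else 0)"

definition mtrace :: "complex mat \<Rightarrow> complex" where
  "mtrace A = (\<Sum>i<dim_row A. A $$ (i, i))"

fun msum :: "nat \<Rightarrow> (nat \<Rightarrow> complex mat) \<Rightarrow> nat \<Rightarrow> complex mat" where
  "msum n C 0 = 0\<^sub>m n n"
| "msum n C (Suc k) = C (Suc k) + msum n C k"

fun mprod_desc :: "nat \<Rightarrow> (nat \<Rightarrow> complex mat) \<Rightarrow> nat \<Rightarrow> complex mat" where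
  "mprod_desc n C 0 = 1\<^sub>m n"
| "mprod_desc n C (Suc k) = C (Suc k) * mprod_desc n C k"

definition Inv :: "nat \<Rightarrow> (nat \<Rightarrow> nat) \<Rightarrow> (nat \<times> nat) set" where
  "Inv N \<sigma> = {(j, k). 1 \<le> j \<and> j < k \<and> k \<le> N \<and> \<sigma> j > \<sigma> k}"

end

theory Submission
  imports Defs
begin


lemma mprod_carrier: "(\<And>s. F s \<in> carrier_mat n n) \<Longrightarrow> mprod_desc n F m \<in> carrier_mat n n"
  by (induction m) (auto intro: mult_carrier_mat)

lemma mprod_cong: "(\<And>s. 1 \<le> s \<Longrightarrow> s \<le> m \<Longrightarrow> F s = G s) \<Longrightarrow> mprod_desc n F m = mprod_desc n G m"
  by (induction m) auto

definition Pm :: "complex \<Rightarrow> complex \<Rightarrow> complex \<Rightarrow> complex \<Rightarrow> complex \<Rightarrow> complex \<Rightarrow> complex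
   \<Rightarrow> complex \<Rightarrow> nat \<Rightarrow> nat \<Rightarrow> complex mat" where
  "Pm t a b c d e f u h h' = mat 2 2 (\<lambda>(g,al). Lel t a b c d e f u g h al h')"

lemma Pm_carrier[simp]: "Pm t a b c d e f u h h' \<in> carrier_mat 2 2"
  by (simp add: Pm_def)

lemma sum2: "(\<Sum>k<(2::nat). g k) = g 0 + (g 1::'a::comm_monoid_add)"
  by (simp add: numeral_2_eq_2)

lemma sum2': "(\<Sum>k\<in>{0..<(2::nat)}. g k) = g 0 + (g 1::'a::comm_monoid_add)"
  by (simp add: numeral_2_eq_2)

lemma mono_mat: "g < 2 \<Longrightarrow> al < 2 \<Longrightarrow> mono t a b c d e f u m g al dl bl
   = (mprod_desc 2 (\<lambda>s. Pm t a b c d e f u (dl s) (bl s)) m) $$ (g, al)"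
proof (induction m arbitrary: g)
  case 0
  then show ?case by simp
next
  case (Suc m)
  have C: "mprod_desc 2 (\<lambda>s. Pm t a b c d e f u (dl s) (bl s)) m \<in> carrier_mat 2 2"
    by (rule mprod_carrier) simp
  show ?case using Suc C
    by (simp add: scalar_prod_def sum2' Pm_def Suc.IH)
qed

lemma less2: "(i::nat) < 2 \<longleftrightarrow> i = 0 \<or> i = 1" by auto

lemma diag2_Pm00: "diag2 (a*u+b) (e*u+f) = Pm t a b c d e f u 0 0"
  by (rule eq_matI) (auto simp: diag2_def mat_of_rows_list_def Pm_def Lel_def less2)
lemma lower2_Pm01: "lower2 ((1-t)*d) = Pm t a b c d e f u 0 1"
  by (rule eq_matI) (auto simp: lower2_def mat_of_rows_list_def Pm_def Lel_def less2)
lemma upper2_Pm10: "upper2 ((1-t)*c*u) = Pm t a b c d e f u 1 0"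
  by (rule eq_matI) (auto simp: upper2_def mat_of_rows_list_def Pm_def Lel_def less2)
lemma diag2_Pm11: "diag2 (a*t*u+b) (e*u+t*f) = Pm t a b c d e f u 1 1"
  by (rule eq_matI) (auto simp: diag2_def mat_of_rows_list_def Pm_def Lel_def less2)

lemma kron_dim[simp]: "dim_row (kron X Y) = dim_row X * dim_row Y" "dim_col (kron X Y) = dim_col X * dim_col Y"
  by (auto simp: kron_def)

lemma kron_index: "i < dim_row X * dim_row Y \<Longrightarrow> j < dim_col X * dim_col Y \<Longrightarrow>
  kron X Y $$ (i,j) = X $$ (i div dim_row Y, j div dim_col Y) * Y $$ (i mod dim_row Y, j mod dim_col Y)"
  by (simp add: kron_def)

lemma AC_rec: "AC t a b c d e f u (Suc n) =
   (kron (Pm t a b c d e f (u (Suc n)) 0 0) (fst (AC t a b c d e f u n))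
      + kron (Pm t a b c d e f (u (Suc n)) 0 1) (snd (AC t a b c d e f u n)),
    kron (Pm t a b c d e f (u (Suc n)) 1 0) (fst (AC t a b c d e f u n))
      + kron (Pm t a b c d e f (u (Suc n)) 1 1) (snd (AC t a b c d e f u n)))"
proof (cases n)
  case 0
  have h: "AC t a b c d e f u (Suc 0) = (Pm t a b c d e f (u (Suc 0)) 0 0, Pm t a b c d e f (u (Suc 0)) 1 0)"
    using upper2_Pm10[of t c "u 1" a b d e f] diag2_Pm00[of a "u 1" b e f t c d] by simp
  have k: "\<And>X Z::complex mat. X \<in> carrier_mat 2 2 \<Longrightarrow> Z \<in> carrier_mat 2 2 \<Longrightarrow> kron X (1\<^sub>m 1) + kron Z (0\<^sub>m 1 1) = X"
    by (rule eq_matI) (auto simp: kron_index)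
  show ?thesis unfolding 0 h AC.simps(1) fst_conv snd_conv by (simp only: k Pm_carrier prod.inject simp_thms)
next
  case (Suc k)
  show ?thesis unfolding Suc
    using diag2_Pm00[of a "u (Suc (Suc k))" b e f t c d, symmetric]
      lower2_Pm01[of t d a b c e f "u (Suc (Suc k))", symmetric]
      upper2_Pm10[of t c "u (Suc (Suc k))" a b d e f, symmetric]
      diag2_Pm11[of a t "u (Suc (Suc k))" b e f c d, symmetric]
    by (simp add: Let_def del: AC.simps(1))
qed

lemma kron_carrier: assumes "X \<in> carrier_mat p q" "Y \<in> carrier_mat r s'" shows "kron X Y \<in> carrier_mat (p*r) (q*s')"
  using carrier_matD[OF assms(1)] carrier_matD[OF assms(2)] by (intro carrier_matI) simp_all

lemma mult_index: "A \<in> carrier_mat n n \<Longrightarrow> B \<in> carrier_mat n n \<Longrightarrow> i < n \<Longrightarrow> j < n \<Longrightarrow>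
  (A * B) $$ (i,j) = (\<Sum>k<n. A $$ (i,k) * B $$ (k,j))"
proof -
  assume as: "A \<in> carrier_mat n n" "B \<in> carrier_mat n n" "i < n" "j < n"
  have "(A * B) $$ (i,j) = (\<Sum>k\<in>{0..<n}. row A i $ k * col B j $ k)"
    using as by (simp add: scalar_prod_def)
  also have "\<dots> = (\<Sum>k<n. A $$ (i,k) * B $$ (k,j))"
    unfolding atLeast0LessThan by (rule sum.cong[OF refl]) (use as in auto)
  finally show ?thesis .
qed

lemma AC_carrier: "fst (AC t a b c d e f u n) \<in> carrier_mat (2^n) (2^n) \<and> snd (AC t a b c d e f u n) \<in> carrier_mat (2^n) (2^n)"
proof (induction n)
  case 0
  then show ?case by simp
next
  case (Suc n)
  then show ?case unfolding AC_rec power_Suc by (auto intro!: add_carrier_mat kron_carrier)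
qed

lemma sum_shift: "(\<Sum>k<p+n. g k) = (\<Sum>k<p. g k) + (\<Sum>k<n. g (p+k::nat))"
  by (induction n) (simp_all add: add.assoc)

lemma sum_split: "(\<Sum>k<m*n. g k) = (\<Sum>k1<m. \<Sum>k2<n. g (k1*n+k2::nat))"
proof (induction m)
  case 0
  then show ?case by simp
next
  case (Suc m)
  have "(\<Sum>k<Suc m*n. g k) = (\<Sum>k<m*n+n. g k)" by (simp add: add.commute)
  also have "\<dots> = (\<Sum>k<m*n. g k) + (\<Sum>k<n. g (m*n+k))" by (rule sum_shift)
  finally show ?case using Suc by simp
qed

lemma configs_0: "configs 0 = {\<lambda>_. undefined}"
  by (simp add: configs_def)

lemma configs_Suc: "configs (Suc m) = (\<lambda>(y, g). g(Suc m := y)) ` ({0,1} \<times> configs m)"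
proof -
  have "{1..Suc m} = insert (Suc m) {1..m}" by auto
  then show ?thesis unfolding configs_def by (simp add: PiE_insert_eq)
qed

lemma configs_Suc_inj: "inj_on (\<lambda>(y, g). g(Suc m := y)) ({0,1} \<times> configs m)"
  unfolding configs_def by (rule inj_combinator[where T="\<lambda>_. {0,1}", simplified]) simp

lemma finite_configs: "finite (configs m)"
  unfolding configs_def by (simp add: finite_PiE)

lemma swap3: "(\<Sum>x\<in>A. \<Sum>y\<in>B. \<Sum>z\<in>C. g x y z) = (\<Sum>y\<in>B. \<Sum>z\<in>C. \<Sum>x\<in>A. (g x y z::'a::comm_monoid_add))"
proof -
  have "(\<Sum>x\<in>A. \<Sum>y\<in>B. \<Sum>z\<in>C. g x y z) = (\<Sum>y\<in>B. \<Sum>x\<in>A. \<Sum>z\<in>C. g x y z)"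
    by (rule sum.swap)
  also have "\<dots> = (\<Sum>y\<in>B. \<Sum>z\<in>C. \<Sum>x\<in>A. g x y z)"
    by (rule sum.cong[OF refl], rule sum.swap)
  finally show ?thesis .
qed

lemma expand:
  fixes P :: "nat \<Rightarrow> nat \<Rightarrow> complex mat" and Y :: "nat \<Rightarrow> complex mat"
  assumes Y: "\<And>h. Y h \<in> carrier_mat n n" and P: "\<And>s h. P s h \<in> carrier_mat 2 2"
  shows "i < 2*n \<Longrightarrow> j < 2*n \<Longrightarrow> mprod_desc (2*n) (\<lambda>s. kron (P s 0) (Y 0) + kron (P s 1) (Y 1)) m $$ (i,j)
     = (\<Sum>bl\<in>configs m. mprod_desc 2 (\<lambda>s. P s (bl s)) m $$ (i div n, j div n)
          * mprod_desc n (\<lambda>s. Y (bl s)) m $$ (i mod n, j mod n))"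
proof (induction m arbitrary: i j)
  case 0
  have n: "0 < n" using 0 by simp
  have "i div n < 2" "j div n < 2" using 0 by (simp_all add: less_mult_imp_div_less)
  moreover have "i mod n < n" "j mod n < n" using n by simp_all
  moreover have "(i = j) = (i div n = j div n \<and> i mod n = j mod n)"
    by (metis div_mult_mod_eq)
  ultimately have e: "(if i = j then 1 else 0) = (if i div n = j div n then 1 else 0) * (if i mod n = j mod n then 1 else (0::complex))"
    by auto
  have l: "mprod_desc (2*n) F 0 $$ (i,j) = (if i = j then 1 else 0)" for F
    using 0 by simp
  have r: "mprod_desc 2 G 0 $$ (i div n, j div n) = (if i div n = j div n then 1 else 0)" for G
    using \<open>i div n < 2\<close> \<open>j div n < 2\<close> by simp
  have r2: "mprod_desc n G 0 $$ (i mod n, j mod n) = (if i mod n = j mod n then 1 else 0)" for G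
    using \<open>i mod n < n\<close> \<open>j mod n < n\<close> by simp
  have sg: "\<And>h x. sum h {x} = (h x::complex)" by simp
  show ?case unfolding configs_0 sg
    by (simp only: l r r2 e)
next
  case (Suc m)
  define F where "F s = kron (P s 0) (Y 0) + kron (P s 1) (Y 1)" for s
  define PP where "PP bl = mprod_desc 2 (\<lambda>s. P s (bl s)) m" for bl
  define YY where "YY bl = mprod_desc n (\<lambda>s. Y (bl s)) m" for bl
  define W where "W = mprod_desc (2*n) F m"
  have n: "0 < n" using Suc by simp
  have Fc: "F s \<in> carrier_mat (2*n) (2*n)" for s
    unfolding F_def using Y[of 0] Y[of 1] P[of s 0] P[of s 1] by (intro add_carrier_mat kron_carrier)
  have Wc: "W \<in> carrier_mat (2*n) (2*n)" unfolding W_def by (rule mprod_carrier[OF Fc])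
  have PPc: "PP bl \<in> carrier_mat 2 2" for bl unfolding PP_def by (rule mprod_carrier[OF P])
  have YYc: "YY bl \<in> carrier_mat n n" for bl unfolding YY_def by (rule mprod_carrier[OF Y])
  have IH: "W $$ (i,j) = (\<Sum>bl\<in>configs m. PP bl $$ (i div n, j div n) * YY bl $$ (i mod n, j mod n))"
    if "i < 2*n" "j < 2*n" for i j
    using Suc.IH[OF that] unfolding W_def F_def PP_def YY_def .
  have idx: "(k1*n+k2) div n = k1" "(k1*n+k2) mod n = k2" "k1*n+k2 < 2*n" if "k1 < 2" "k2 < n" for k1 k2
    using that n by (auto simp: less2)
  have Fidx: "F s $$ (i, k1*n+k2) = (\<Sum>h\<in>{0,1}. P s h $$ (i div n, k1) * Y h $$ (i mod n, k2))"
    if "k1 < 2" "k2 < n" for s k1 k2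
  proof -
    have d: "dim_row (P s' h) = 2" "dim_col (P s' h) = 2" "dim_row (Y h) = n" "dim_col (Y h) = n" for s' h
      using P[of s' h] Y[of h] by auto
    have "F s $$ (i, k1*n+k2) = P s 0 $$ (i div n, (k1*n+k2) div n) * Y 0 $$ (i mod n, (k1*n+k2) mod n)
       + P s 1 $$ (i div n, (k1*n+k2) div n) * Y 1 $$ (i mod n, (k1*n+k2) mod n)"
      using idx[OF that] Suc.prems unfolding F_def by (simp add: kron_index d)
    then show ?thesis unfolding idx[OF that] by simp
  qed
  have "mprod_desc (2*n) F (Suc m) $$ (i,j) = (\<Sum>k<2*n. F (Suc m) $$ (i,k) * W $$ (k,j))"
    using Suc.prems Fc Wc by (simp add: W_def mult_index)
  also have "\<dots> = (\<Sum>k1<(2::nat). \<Sum>k2<n. F (Suc m) $$ (i, k1*n+k2) * W $$ (k1*n+k2, j))"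
    by (rule sum_split)
  also have "\<dots> = (\<Sum>k1<(2::nat). \<Sum>k2<n. (\<Sum>h\<in>{0,1}. P (Suc m) h $$ (i div n, k1) * Y h $$ (i mod n, k2))
        * (\<Sum>bl\<in>configs m. PP bl $$ (k1, j div n) * YY bl $$ (k2, j mod n)))"
  proof (intro sum.cong refl)
    fix k1 k2 :: nat assume "k1 \<in> {..<2}" "k2 \<in> {..<n}"
    hence h: "k1<2" "k2<n" by auto
    show "F (Suc m) $$ (i, k1*n+k2) * W $$ (k1*n+k2, j) = (\<Sum>h\<in>{0,1}. P (Suc m) h $$ (i div n, k1) * Y h $$ (i mod n, k2))
        * (\<Sum>bl\<in>configs m. PP bl $$ (k1, j div n) * YY bl $$ (k2, j mod n))"
      unfolding Fidx[OF h] IH[OF idx(3)[OF h] Suc.prems(2)] idx(1,2)[OF h] ..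
  qed
  also have "\<dots> = (\<Sum>h\<in>{0,1}. \<Sum>bl\<in>configs m. (\<Sum>k1<(2::nat). P (Suc m) h $$ (i div n, k1) * PP bl $$ (k1, j div n))
       * (\<Sum>k2<n. Y h $$ (i mod n, k2) * YY bl $$ (k2, j mod n)))" (is "?L = ?R")
  proof -
    have "?L = (\<Sum>k1<(2::nat). \<Sum>k2<n. \<Sum>h\<in>{0,1}. \<Sum>bl\<in>configs m.
        (P (Suc m) h $$ (i div n, k1) * Y h $$ (i mod n, k2)) * (PP bl $$ (k1, j div n) * YY bl $$ (k2, j mod n)))"
      by (simp only: sum_product)
    also have "\<dots> = (\<Sum>k1<(2::nat). \<Sum>h\<in>{0,1}. \<Sum>bl\<in>configs m. \<Sum>k2<n.
        (P (Suc m) h $$ (i div n, k1) * Y h $$ (i mod n, k2)) * (PP bl $$ (k1, j div n) * YY bl $$ (k2, j mod n)))"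
      by (rule sum.cong[OF refl], rule swap3)
    also have "\<dots> = (\<Sum>h\<in>{0,1}. \<Sum>bl\<in>configs m. \<Sum>k1<(2::nat). \<Sum>k2<n.
        (P (Suc m) h $$ (i div n, k1) * Y h $$ (i mod n, k2)) * (PP bl $$ (k1, j div n) * YY bl $$ (k2, j mod n)))"
      by (rule swap3)
    also have "\<dots> = ?R"
      by (intro sum.cong refl, simp only: sum_product, intro sum.cong refl, simp add: mult_ac)
    finally show ?thesis .
  qed
  also have "\<dots> = (\<Sum>h\<in>{0,1}. \<Sum>bl\<in>configs m.
       (P (Suc m) h * PP bl) $$ (i div n, j div n) * (Y h * YY bl) $$ (i mod n, j mod n))"
  proof -
    have a: "i div n < 2" "j div n < 2" using Suc.prems by (simp_all add: less_mult_imp_div_less)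
    have b: "i mod n < n" "j mod n < n" using n by simp_all
    show ?thesis
      by (intro sum.cong refl) (simp only: mult_index[OF P PPc a] mult_index[OF Y YYc b])
  qed
  also have "\<dots> = (\<Sum>bl\<in>configs (Suc m). mprod_desc 2 (\<lambda>s. P s (bl s)) (Suc m) $$ (i div n, j div n)
          * mprod_desc n (\<lambda>s. Y (bl s)) (Suc m) $$ (i mod n, j mod n))" (is "?L = (\<Sum>bl\<in>_. ?T bl)")
  proof -
    have T: "?T (bl(Suc m := h)) = (P (Suc m) h * PP bl) $$ (i div n, j div n) * (Y h * YY bl) $$ (i mod n, j mod n)" for bl h
    proof -
      have "mprod_desc 2 (\<lambda>s. P s ((bl(Suc m := h)) s)) m = PP bl"
        unfolding PP_def by (rule mprod_cong) auto
      moreover have "mprod_desc n (\<lambda>s. Y ((bl(Suc m := h)) s)) m = YY bl"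
        unfolding YY_def by (rule mprod_cong) auto
      ultimately show ?thesis by simp
    qed
    have "(\<Sum>bl\<in>configs (Suc m). ?T bl) = (\<Sum>p\<in>{0,1} \<times> configs m. ?T ((\<lambda>(y, g). g(Suc m := y)) p))"
      unfolding configs_Suc by (rule sum.reindex[OF configs_Suc_inj, unfolded comp_def])
    also have "\<dots> = (\<Sum>h\<in>{0,1}. \<Sum>bl\<in>configs m. ?T (bl(Suc m := h)))"
      unfolding sum.cartesian_product by (rule sum.cong[OF refl]) (simp add: split_def)
    also have "\<dots> = ?L" by (simp only: T)
    finally show ?thesis by simp
  qed
  finally show ?case unfolding F_def .
qed


definition Xm :: "complex \<Rightarrow> complex \<Rightarrow> complex \<Rightarrow> complex \<Rightarrow> complex \<Rightarrow> complex \<Rightarrow> complex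
   \<Rightarrow> (nat \<Rightarrow> complex) \<Rightarrow> nat \<Rightarrow> nat \<Rightarrow> complex mat" where
  "Xm t a b c d e f u n h = (if h = 0 then fst (AC t a b c d e f u n) else snd (AC t a b c d e f u n))"

lemma Xm_carrier: "Xm t a b c d e f u n h \<in> carrier_mat (2^n) (2^n)"
  using AC_carrier[of t a b c d e f u n] by (simp add: Xm_def)

lemma Xm_Suc: "h \<in> {0,1} \<Longrightarrow> Xm t a b c d e f u (Suc n) h =
   kron (Pm t a b c d e f (u (Suc n)) h 0) (Xm t a b c d e f u n 0)
   + kron (Pm t a b c d e f (u (Suc n)) h 1) (Xm t a b c d e f u n 1)"
  by (auto simp: Xm_def AC_rec)

lemma configs_val: "dl \<in> configs M \<Longrightarrow> s \<in> {1..M} \<Longrightarrow> dl s \<in> {0,1}"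
  unfolding configs_def by auto

lemma base_prod: "mprod_desc 1 (\<lambda>s. Xm t a b c d e f u 0 (dl s)) m $$ (0,0)
   = (if \<forall>s\<in>{1..m}. dl s = 0 then 1 else 0)"
proof (induction m)
  case 0
  then show ?case by simp
next
  case (Suc m)
  have c: "mprod_desc 1 (\<lambda>s. Xm t a b c d e f u 0 (dl s)) m \<in> carrier_mat 1 1"
    by (rule mprod_carrier) (use Xm_carrier[of t a b c d e f u 0] in simp)
  have c2: "Xm t a b c d e f u 0 (dl (Suc m)) \<in> carrier_mat 1 1"
    using Xm_carrier[of t a b c d e f u 0] by simp
  have e: "Xm t a b c d e f u 0 (dl (Suc m)) $$ (0,0) = (if dl (Suc m) = 0 then 1 else 0)"
    by (simp add: Xm_def)
  have "mprod_desc 1 (\<lambda>s. Xm t a b c d e f u 0 (dl s)) (Suc m) $$ (0,0)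
     = Xm t a b c d e f u 0 (dl (Suc m)) $$ (0,0) * mprod_desc 1 (\<lambda>s. Xm t a b c d e f u 0 (dl s)) m $$ (0,0)"
    using mult_index[OF c2 c, of 0 0] by simp
  also have "\<dots> = (if \<forall>s\<in>{1..Suc m}. dl s = 0 then 1 else 0)"
  proof -
    have "(\<forall>s\<in>{1..Suc m}. dl s = 0) = ((\<forall>s\<in>{1..m}. dl s = 0) \<and> dl (Suc m) = 0)"
      by (auto simp: le_Suc_eq)
    then show ?thesis unfolding e Suc.IH by simp
  qed
  finally show ?case .
qed

lemma mp_repr: "dl \<in> configs M \<Longrightarrow> Bstate t a b c d e f M u n dl
   = mprod_desc (2^n) (\<lambda>s. Xm t a b c d e f u n (dl s)) M $$ (0, 2^n - 1)"
proof (induction n arbitrary: dl)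
  case 0
  have "(dl = cfg M {}) = (\<forall>s\<in>{1..M}. dl s = 0)"
  proof
    assume "dl = cfg M {}" then show "\<forall>s\<in>{1..M}. dl s = 0" by (simp add: cfg_def)
  next
    assume h: "\<forall>s\<in>{1..M}. dl s = 0"
    show "dl = cfg M {}"
    proof
      fix s show "dl s = cfg M {} s"
        using h 0 unfolding cfg_def configs_def by (cases "s \<in> {1..M}") (auto simp: PiE_def extensional_def)
    qed
  qed
  then show ?case using base_prod[of t a b c d e f u dl M] by (simp add: Omega_def)
next
  case (Suc n)
  let ?P = "\<lambda>s h. Pm t a b c d e f (u (Suc n)) (dl s) h"
  let ?Y = "Xm t a b c d e f u n"
  have cong: "mprod_desc (2^Suc n) (\<lambda>s. Xm t a b c d e f u (Suc n) (dl s)) M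
     = mprod_desc (2 * 2^n) (\<lambda>s. kron (?P s 0) (?Y 0) + kron (?P s 1) (?Y 1)) M"
    by (simp only: power_Suc, rule mprod_cong, rule Xm_Suc, rule configs_val[OF Suc.prems], simp)
  have pos: "(0::nat) < 2^n" by simp
  have i: "(0::nat) < 2 * 2^n" "2 * 2^n - 1 < 2 * (2::nat)^n" by simp_all
  have dv: "(2 * 2^n - 1) div 2^n = (1::nat)" "(2 * 2^n - 1) mod 2^n = 2^n - (1::nat)"
  proof -
    have e: "2 * 2^n - 1 = (2^n - 1) + 1 * (2^n::nat)" using pos by linarith
    have l: "(2^n - 1::nat) < 2^n" using pos by linarith
    show "(2 * 2^n - 1) div 2^n = (1::nat)"
      unfolding e div_mult_self1[OF pos[THEN less_imp_neq, symmetric]] using l by simp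
    show "(2 * 2^n - 1) mod 2^n = 2^n - (1::nat)"
      unfolding e mod_mult_self1 using l by simp
  qed
  have "mprod_desc (2^Suc n) (\<lambda>s. Xm t a b c d e f u (Suc n) (dl s)) M $$ (0, 2^Suc n - 1)
     = (\<Sum>bl\<in>configs M. mprod_desc 2 (\<lambda>s. ?P s (bl s)) M $$ (0, 1)
          * mprod_desc (2^n) (\<lambda>s. ?Y (bl s)) M $$ (0, 2^n - 1))"
    unfolding cong using expand[of ?Y "2^n" ?P 0 "2*2^n - 1" M, OF Xm_carrier Pm_carrier i] dv
    by simp
  also have "\<dots> = Bstate t a b c d e f M u (Suc n) dl"
    by (simp add: Bop_def mono_mat Suc.IH)
  finally show ?case by simp
qed

lemma mtrace_Q: "Y \<in> carrier_mat (2^N) (2^N) \<Longrightarrow> mtrace (Qmat N * Y) = Y $$ (0, 2^N - 1)"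
proof -
  assume Y: "Y \<in> carrier_mat (2^N) (2^N)"
  have Q: "Qmat N \<in> carrier_mat (2^N) (2^N)" by (simp add: Qmat_def)
  have pos: "(0::nat) < 2^N" by simp
  have "mtrace (Qmat N * Y) = (\<Sum>i<2^N. (Qmat N * Y) $$ (i,i))"
    using Q by (simp add: mtrace_def)
  also have "\<dots> = (\<Sum>i<2^N. if i = 2^N - 1 then Y $$ (0, i) else 0)"
  proof (rule sum.cong[OF refl])
    fix i assume "i \<in> {..<(2::nat)^N}"
    then have i: "i < 2^N" by simp
    have "(Qmat N * Y) $$ (i,i) = (\<Sum>k<2^N. Qmat N $$ (i,k) * Y $$ (k,i))"
      by (rule mult_index[OF Q Y i i])
    also have "\<dots> = (\<Sum>k<(2::nat)^N. if k = 0 then (if i = 2^N - 1 then Y $$ (0, i) else 0) else 0)"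
      by (rule sum.cong[OF refl]) (use i in \<open>auto simp: Qmat_def\<close>)
    also have "\<dots> = (if i = 2^N - 1 then Y $$ (0, i) else 0)"
      using pos by (simp add: sum.delta)
    finally show "(Qmat N * Y) $$ (i,i) = (if i = 2^N - 1 then Y $$ (0, i) else 0)" .
  qed
  also have "\<dots> = Y $$ (0, 2^N - 1)"
    using pos by (simp add: sum.delta)
  finally show ?thesis .
qed


lemma mprod_carrier': "(\<And>s. 1 \<le> s \<Longrightarrow> s \<le> m \<Longrightarrow> F s \<in> carrier_mat n n) \<Longrightarrow> mprod_desc n F m \<in> carrier_mat n n"
  by (induction m) (auto intro: mult_carrier_mat)

lemma smult_smult_m: "a \<cdot>\<^sub>m (b \<cdot>\<^sub>m X) = (a * b) \<cdot>\<^sub>m (X::complex mat)"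
  by (rule eq_matI) auto

lemma one_smult_m: "1 \<cdot>\<^sub>m X = (X::complex mat)"
  by (rule eq_matI) auto

locale comm_sys =
  fixes n N :: nat and A :: "complex mat" and Cj :: "nat \<Rightarrow> complex mat" and r :: "nat \<Rightarrow> complex"
    and s :: "nat \<Rightarrow> nat \<Rightarrow> complex"
  assumes Ac: "A \<in> carrier_mat n n"
    and Cc: "\<And>j. j \<in> {1..N} \<Longrightarrow> Cj j \<in> carrier_mat n n"
    and CA: "\<And>j. j \<in> {1..N} \<Longrightarrow> Cj j * A = r j \<cdot>\<^sub>m (A * Cj j)"
    and Csq: "\<And>j. j \<in> {1..N} \<Longrightarrow> Cj j * Cj j = 0\<^sub>m n n"
    and CC: "\<And>j k. j \<in> {1..N} \<Longrightarrow> k \<in> {1..N} \<Longrightarrow> j \<noteq> k \<Longrightarrow> Cj j * Cj k = s j k \<cdot>\<^sub>m (Cj k * Cj j)"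
begin

definition PS :: "nat set \<Rightarrow> nat \<Rightarrow> complex mat" where
  "PS S m = mprod_desc n (\<lambda>k. if k \<in> S then Cj k else 1\<^sub>m n) m"

lemma PS_carrier: "m \<le> N \<Longrightarrow> PS S m \<in> carrier_mat n n"
  unfolding PS_def by (rule mprod_carrier') (auto intro: Cc)

lemma PS_Suc: "PS S (Suc m) = (if Suc m \<in> S then Cj (Suc m) else 1\<^sub>m n) * PS S m"
  by (simp add: PS_def)

lemma PS_cong: "(\<And>k. 1 \<le> k \<Longrightarrow> k \<le> m \<Longrightarrow> k \<in> S \<longleftrightarrow> k \<in> S') \<Longrightarrow> PS S m = PS S' m"
  unfolding PS_def by (rule mprod_cong) auto

lemma Apow_c: "A ^\<^sub>m p \<in> carrier_mat n n"
  using Ac by simp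

lemma CApow: "j \<in> {1..N} \<Longrightarrow> Cj j * A ^\<^sub>m p = r j ^ p \<cdot>\<^sub>m (A ^\<^sub>m p * Cj j)"
proof (induction p)
  case 0
  then show ?case using Cc[OF 0] Ac by (simp add: one_smult_m)
next
  case (Suc p)
  have C: "Cj j \<in> carrier_mat n n" using Cc[OF Suc.prems] .
  have "Cj j * A ^\<^sub>m Suc p = (Cj j * A ^\<^sub>m p) * A"
    using assoc_mult_mat[OF C Apow_c Ac, symmetric] by simp
  also have "\<dots> = (r j ^ p \<cdot>\<^sub>m (A ^\<^sub>m p * Cj j)) * A" using Suc by simp
  also have "\<dots> = r j ^ p \<cdot>\<^sub>m (A ^\<^sub>m p * (Cj j * A))"
    using mult_smult_assoc_mat[OF mult_carrier_mat[OF Apow_c C] Ac] assoc_mult_mat[OF Apow_c C Ac] by simp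
  also have "\<dots> = r j ^ p \<cdot>\<^sub>m (A ^\<^sub>m p * (r j \<cdot>\<^sub>m (A * Cj j)))" using CA[OF Suc.prems] by simp
  also have "\<dots> = r j ^ Suc p \<cdot>\<^sub>m (A ^\<^sub>m Suc p * Cj j)"
    using mult_smult_distrib[OF Apow_c mult_carrier_mat[OF Ac C]] assoc_mult_mat[OF Apow_c Ac C]
    by (simp add: smult_smult_m mult.commute)
  finally show ?case .
qed

lemma PS_zero: "j \<in> S \<Longrightarrow> 1 \<le> j \<Longrightarrow> j \<le> m \<Longrightarrow> m \<le> N \<Longrightarrow> Cj j * PS S m = 0\<^sub>m n n"
proof (induction m)
  case 0
  then show ?case by simp
next
  case (Suc m)
  have jN: "j \<in> {1..N}" using Suc.prems by simp
  have C: "Cj j \<in> carrier_mat n n" using Cc[OF jN] .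
  have P: "PS S m \<in> carrier_mat n n" using Suc.prems by (intro PS_carrier) simp
  show ?case
  proof (cases "j = Suc m")
    case True
    have "Cj j * PS S (Suc m) = (Cj j * Cj j) * PS S m"
      using True Suc.prems C P by (simp add: PS_Suc)
    then show ?thesis using Csq[OF jN] P by simp
  next
    case False
    then have jm: "j \<le> m" using Suc.prems by simp
    have IH: "Cj j * PS S m = 0\<^sub>m n n" using Suc jm by simp
    show ?thesis
    proof (cases "Suc m \<in> S")
      case True
      have mN: "Suc m \<in> {1..N}" using Suc.prems by simp
      have C2: "Cj (Suc m) \<in> carrier_mat n n" using Cc[OF mN] .
      have "Cj j * PS S (Suc m) = (Cj j * Cj (Suc m)) * PS S m"
        using True C C2 P by (simp add: PS_Suc)
      also have "\<dots> = s j (Suc m) \<cdot>\<^sub>m (Cj (Suc m) * (Cj j * PS S m))"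
        using CC[OF jN mN False] C C2 P by (simp add: mult_smult_assoc_mat[of _ n n _ n])
      also have "\<dots> = 0\<^sub>m n n" using IH C2 by simp
      finally show ?thesis .
    next
      case False
      then show ?thesis using IH C P by (simp add: PS_Suc)
    qed
  qed
qed

lemma PS_ins: "j \<notin> S \<Longrightarrow> 1 \<le> j \<Longrightarrow> j \<le> m \<Longrightarrow> m \<le> N \<Longrightarrow>
  Cj j * PS S m = (\<Prod>k\<in>{k\<in>S. j < k \<and> k \<le> m}. s j k) \<cdot>\<^sub>m PS (insert j S) m"
proof (induction m)
  case 0
  then show ?case by simp
next
  case (Suc m)
  have jN: "j \<in> {1..N}" using Suc.prems by simp
  have C: "Cj j \<in> carrier_mat n n" using Cc[OF jN] .
  have P: "PS S m \<in> carrier_mat n n" using Suc.prems by (intro PS_carrier) simp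
  have P': "PS (insert j S) m \<in> carrier_mat n n" using Suc.prems by (intro PS_carrier) simp
  show ?case
  proof (cases "j = Suc m")
    case True
    have e: "{k\<in>S. Suc m < k \<and> k \<le> Suc m} = {}" by auto
    have "PS (insert j S) m = PS S m" by (rule PS_cong) (use True in auto)
    then show ?thesis using True Suc.prems C P by (simp add: PS_Suc e one_smult_m)
  next
    case False
    then have jm: "j \<le> m" using Suc.prems by simp
    have IH: "Cj j * PS S m = (\<Prod>k\<in>{k\<in>S. j < k \<and> k \<le> m}. s j k) \<cdot>\<^sub>m PS (insert j S) m"
      using Suc jm by simp
    show ?thesis
    proof (cases "Suc m \<in> S")
      case True
      have mN: "Suc m \<in> {1..N}" using Suc.prems by simp
      have C2: "Cj (Suc m) \<in> carrier_mat n n" using Cc[OF mN] .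
      have e: "{k\<in>S. j < k \<and> k \<le> Suc m} = insert (Suc m) {k\<in>S. j < k \<and> k \<le> m}"
        using True jm by auto
      have "Cj j * PS S (Suc m) = (Cj j * Cj (Suc m)) * PS S m"
        using True C C2 P by (simp add: PS_Suc)
      also have "\<dots> = s j (Suc m) \<cdot>\<^sub>m (Cj (Suc m) * (Cj j * PS S m))"
        using CC[OF jN mN False] C C2 P by (simp add: mult_smult_assoc_mat[of _ n n _ n])
      also have "\<dots> = (s j (Suc m) * (\<Prod>k\<in>{k\<in>S. j < k \<and> k \<le> m}. s j k)) \<cdot>\<^sub>m (Cj (Suc m) * PS (insert j S) m)"
        unfolding IH using C2 P' by (simp add: mult_smult_distrib[of _ n n _ n] smult_smult_m)
      also have "\<dots> = (\<Prod>k\<in>{k\<in>S. j < k \<and> k \<le> Suc m}. s j k) \<cdot>\<^sub>m PS (insert j S) (Suc m)"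
        unfolding e using True by (simp add: PS_Suc)
      finally show ?thesis .
    next
      case False
      have e: "{k\<in>S. j < k \<and> k \<le> Suc m} = {k\<in>S. j < k \<and> k \<le> m}"
        using False by (auto simp: le_Suc_eq)
      have "Suc m \<notin> insert j S" using False \<open>j \<noteq> Suc m\<close> by simp
      then show ?thesis using False IH C P P' by (simp add: PS_Suc e)
    qed
  qed
qed

end



definition Tf :: "(nat \<Rightarrow> complex) \<Rightarrow> (nat \<Rightarrow> nat \<Rightarrow> complex) \<Rightarrow> (nat \<Rightarrow> nat) \<Rightarrow> nat \<Rightarrow> (nat \<Rightarrow> nat) \<Rightarrow> complex" where
 "Tf r gi x p \<sigma> = (\<Prod>q\<in>{1..p}. r (\<sigma> q) ^ x q) * (\<Prod>(j,k)\<in>Inv p \<sigma>. gi (\<sigma> k) (\<sigma> j))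
    * (\<Prod>m\<in>\<sigma>`{1..p}. (1/r m) ^ card {k\<in>\<sigma>`{1..p}. k \<le> m})"

lemma Inv_finite: "finite (Inv p \<sigma>)"
  by (rule finite_subset[of _ "{1..p} \<times> {1..p}"]) (auto simp: Inv_def)

lemma Inv_Suc: "Inv (Suc p) (\<sigma>(Suc p := j)) = Inv p \<sigma> \<union> (\<lambda>q. (q, Suc p)) ` {q\<in>{1..p}. j < \<sigma> q}"
  by (auto simp: Inv_def le_Suc_eq)

lemma T_step:
  assumes inj: "inj_on \<sigma> {1..p}" and j: "j \<notin> \<sigma>`{1..p}" and rnz: "r j \<noteq> 0" and X: "Suc p \<le> x (Suc p)"
  shows "Tf r gi x (Suc p) (\<sigma>(Suc p := j)) = Tf r gi x p \<sigma> * r j ^ (x (Suc p) - Suc p)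
     * (\<Prod>k\<in>{k\<in>\<sigma>`{1..p}. j < k}. r j * (1/r k) * gi j k)"
proof -
  define \<sigma>' where "\<sigma>' = \<sigma>(Suc p := j)"
  define img where "img = \<sigma>`{1..p}"
  have fimg: "finite img" unfolding img_def by simp
  have img': "\<sigma>'`{1..Suc p} = insert j img"
  proof -
    have a: "{1..Suc p} = insert (Suc p) {1..p}" by auto
    have b: "\<sigma>'`{1..p} = img" unfolding \<sigma>'_def img_def by (rule image_cong) auto
    show ?thesis unfolding a image_insert b by (simp add: \<sigma>'_def)
  qed
  have jimg: "j \<notin> img" using j by (simp add: img_def)
  define Gj where "Gj = (\<Prod>k\<in>{k\<in>img. j < k}. gi j k)"
  define Qj where "Qj = (\<Prod>k\<in>{k\<in>img. j < k}. 1 / r k)"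
  define cl where "cl = card {k\<in>img. k < j}"
  define cg where "cg = card {k\<in>img. j < k}"
  have cardimg: "card img = p" unfolding img_def using inj by (simp add: card_image)
  have csum: "cl + cg = p"
  proof -
    have "img = {k\<in>img. k < j} \<union> {k\<in>img. j < k}" using jimg by (auto, metis linorder_neqE_nat)
    moreover have "{k\<in>img. k < j} \<inter> {k\<in>img. j < k} = {}" by auto
    ultimately have "card img = cl + cg" unfolding cl_def cg_def using fimg
      by (metis (no_types, lifting) card_Un_disjoint finite_Un)
    then show ?thesis using cardimg by simp
  qed
  have P1: "(\<Prod>q\<in>{1..Suc p}. r (\<sigma>' q) ^ x q) = (\<Prod>q\<in>{1..p}. r (\<sigma> q) ^ x q) * r j ^ x (Suc p)"
  proof -
    have "(\<Prod>q\<in>{1..Suc p}. r (\<sigma>' q) ^ x q) = (\<Prod>q\<in>{1..p}. r (\<sigma>' q) ^ x q) * r (\<sigma>' (Suc p)) ^ x (Suc p)"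
      by (simp add: prod.cl_ivl_Suc)
    also have "(\<Prod>q\<in>{1..p}. r (\<sigma>' q) ^ x q) = (\<Prod>q\<in>{1..p}. r (\<sigma> q) ^ x q)"
      by (rule prod.cong) (auto simp: \<sigma>'_def)
    finally show ?thesis by (simp add: \<sigma>'_def)
  qed
  have P2: "(\<Prod>(a,b)\<in>Inv (Suc p) \<sigma>'. gi (\<sigma>' b) (\<sigma>' a)) = (\<Prod>(a,b)\<in>Inv p \<sigma>. gi (\<sigma> b) (\<sigma> a)) * Gj"
  proof -
    have disj: "Inv p \<sigma> \<inter> (\<lambda>q. (q, Suc p)) ` {q\<in>{1..p}. j < \<sigma> q} = {}"
      by (auto simp: Inv_def)
    have "(\<Prod>(a,b)\<in>Inv (Suc p) \<sigma>'. gi (\<sigma>' b) (\<sigma>' a)) =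
       (\<Prod>(a,b)\<in>Inv p \<sigma>. gi (\<sigma>' b) (\<sigma>' a)) * (\<Prod>(a,b)\<in>(\<lambda>q. (q, Suc p)) ` {q\<in>{1..p}. j < \<sigma> q}. gi (\<sigma>' b) (\<sigma>' a))"
      unfolding \<sigma>'_def Inv_Suc by (rule prod.union_disjoint) (simp add: Inv_finite, simp, rule disj)
    also have "(\<Prod>(a,b)\<in>Inv p \<sigma>. gi (\<sigma>' b) (\<sigma>' a)) = (\<Prod>(a,b)\<in>Inv p \<sigma>. gi (\<sigma> b) (\<sigma> a))"
      by (rule prod.cong) (auto simp: Inv_def \<sigma>'_def)
    also have "(\<Prod>(a,b)\<in>(\<lambda>q. (q, Suc p)) ` {q\<in>{1..p}. j < \<sigma> q}. gi (\<sigma>' b) (\<sigma>' a))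
        = (\<Prod>q\<in>{q\<in>{1..p}. j < \<sigma> q}. gi j (\<sigma> q))"
      by (subst prod.reindex) (auto simp: inj_on_def \<sigma>'_def)
    also have "\<dots> = (\<Prod>k\<in>\<sigma> ` {q\<in>{1..p}. j < \<sigma> q}. gi j k)"
      by (rule prod.reindex[symmetric, unfolded comp_def]) (rule inj_on_subset[OF inj], auto)
    also have "\<sigma> ` {q\<in>{1..p}. j < \<sigma> q} = {k\<in>img. j < k}" unfolding img_def by auto
    finally show ?thesis unfolding Gj_def .
  qed
  have P3: "(\<Prod>m\<in>\<sigma>'`{1..Suc p}. (1/r m) ^ card {k\<in>\<sigma>'`{1..Suc p}. k \<le> m})
     = (1/r j) ^ (cl + 1) * (\<Prod>m\<in>img. (1/r m) ^ card {k\<in>img. k \<le> m}) * Qj"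
  proof -
    have cj: "card {k\<in>insert j img. k \<le> j} = cl + 1"
    proof -
      have "{k\<in>insert j img. k \<le> j} = insert j {k\<in>img. k < j}" using jimg by auto
      then show ?thesis unfolding cl_def using fimg jimg by simp
    qed
    have cm: "card {k\<in>insert j img. k \<le> m} = card {k\<in>img. k \<le> m} + (if j < m then 1 else 0)" if "m \<in> img" for m
    proof (cases "j < m")
      case True
      then have "{k\<in>insert j img. k \<le> m} = insert j {k\<in>img. k \<le> m}" by auto
      then show ?thesis using True fimg jimg by simp
    next
      case False
      then have "j \<noteq> m" "\<not> j \<le> m" using that jimg by auto
      then have "{k\<in>insert j img. k \<le> m} = {k\<in>img. k \<le> m}" by auto
      then show ?thesis using False by simp
    qed
    have "(\<Prod>m\<in>insert j img. (1/r m) ^ card {k\<in>insert j img. k \<le> m})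
        = (1/r j) ^ (cl + 1) * (\<Prod>m\<in>img. (1/r m) ^ card {k\<in>insert j img. k \<le> m})"
      using fimg jimg cj by simp
    also have "(\<Prod>m\<in>img. (1/r m) ^ card {k\<in>insert j img. k \<le> m})
        = (\<Prod>m\<in>img. (1/r m) ^ card {k\<in>img. k \<le> m} * (if j < m then 1/r m else 1))"
    proof (rule prod.cong[OF refl])
      fix m assume m: "m \<in> img"
      show "(1/r m) ^ card {k\<in>insert j img. k \<le> m} = (1/r m) ^ card {k\<in>img. k \<le> m} * (if j < m then 1/r m else 1)"
        unfolding cm[OF m] by (cases "j < m") (simp_all only: if_True if_False power_add power_one_right add_0_right mult_1_right)
    qed
    also have "\<dots> = (\<Prod>m\<in>img. (1/r m) ^ card {k\<in>img. k \<le> m}) * (\<Prod>m\<in>img. if j < m then 1/r m else 1)"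
      by (rule prod.distrib)
    also have "(\<Prod>m\<in>img. if j < m then 1/r m else 1) = Qj"
      unfolding Qj_def using fimg by (simp add: prod.inter_filter)
    finally show ?thesis unfolding img' by (simp add: mult.assoc)
  qed
  have P4: "(\<Prod>k\<in>{k\<in>img. j < k}. r j * (1/r k) * gi j k) = r j ^ cg * Qj * Gj"
    unfolding Qj_def Gj_def cg_def by (simp only: prod.distrib prod_constant)
  have E: "r j ^ x (Suc p) * (1/r j) ^ (cl + 1) = r j ^ (x (Suc p) - Suc p) * r j ^ cg"
  proof -
    have e: "x (Suc p) = (x (Suc p) - Suc p) + cg + (cl + 1)" using X csum by linarith
    have pw: "\<And>X a b c. X = a + b + c \<Longrightarrow> r j ^ X = r j ^ a * r j ^ b * r j ^ c"
      by (simp add: power_add)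
    have h2: "r j ^ (cl + 1) * (1/r j) ^ (cl + 1) = 1"
      using rnz by (simp add: power_mult_distrib[symmetric])
    have "r j ^ x (Suc p) * (1/r j) ^ (cl + 1) = r j ^ (x (Suc p) - Suc p) * r j ^ cg * (r j ^ (cl + 1) * (1/r j) ^ (cl + 1))"
      unfolding pw[OF e] by (simp only: mult.assoc)
    also have "\<dots> = r j ^ (x (Suc p) - Suc p) * r j ^ cg" by (simp only: h2 mult_1_right)
    finally show ?thesis .
  qed
  have "Tf r gi x (Suc p) \<sigma>' = ((\<Prod>q\<in>{1..p}. r (\<sigma> q) ^ x q) * r j ^ x (Suc p))
      * ((\<Prod>(a,b)\<in>Inv p \<sigma>. gi (\<sigma> b) (\<sigma> a)) * Gj)
      * ((1/r j) ^ (cl + 1) * (\<Prod>m\<in>img. (1/r m) ^ card {k\<in>img. k \<le> m}) * Qj)"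
    unfolding Tf_def P1 P2 P3 ..
  also have "\<dots> = Tf r gi x p \<sigma> * (r j ^ x (Suc p) * (1/r j) ^ (cl + 1)) * (Qj * Gj)"
    unfolding Tf_def img_def by (simp add: mult_ac)
  also have "\<dots> = Tf r gi x p \<sigma> * r j ^ (x (Suc p) - Suc p) * (r j ^ cg * Qj * Gj)"
    unfolding E by (simp add: mult_ac)
  finally show ?thesis unfolding \<sigma>'_def P4[unfolded img_def] img_def .
qed



definition msumset :: "nat \<Rightarrow> ('b \<Rightarrow> complex mat) \<Rightarrow> 'b set \<Rightarrow> complex mat" where
  "msumset k F S = mat k k (\<lambda>(i,j). \<Sum>x\<in>S. F x $$ (i,j))"

lemma msumset_dim[simp]: "dim_row (msumset k F S) = k" "dim_col (msumset k F S) = k"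
  by (simp_all add: msumset_def)

lemma msumset_carrier[simp]: "msumset k F S \<in> carrier_mat k k"
  by (simp add: msumset_def)

lemma msumset_index: "i < k \<Longrightarrow> j < k \<Longrightarrow> msumset k F S $$ (i,j) = (\<Sum>x\<in>S. F x $$ (i,j))"
  by (simp add: msumset_def)

lemma mult_msumset: assumes B: "B \<in> carrier_mat k k" and F: "\<And>x. x \<in> S \<Longrightarrow> F x \<in> carrier_mat k k"
  shows "B * msumset k F S = msumset k (\<lambda>x. B * F x) S"
proof (rule eq_matI)
  fix i j assume "i < dim_row (msumset k (\<lambda>x. B * F x) S)" "j < dim_col (msumset k (\<lambda>x. B * F x) S)"
  then have ij: "i < k" "j < k" by auto
  have "(B * msumset k F S) $$ (i,j) = (\<Sum>l<k. B $$ (i,l) * (\<Sum>x\<in>S. F x $$ (l,j)))"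
    using mult_index[OF B msumset_carrier ij] by (simp add: msumset_index ij)
  also have "\<dots> = (\<Sum>x\<in>S. \<Sum>l<k. B $$ (i,l) * F x $$ (l,j))"
    by (simp add: sum_distrib_left sum.swap[of _ "{..<k}"])
  also have "\<dots> = (\<Sum>x\<in>S. (B * F x) $$ (i,j))"
    by (rule sum.cong[OF refl]) (simp add: mult_index[OF B F ij])
  finally show "(B * msumset k F S) $$ (i,j) = msumset k (\<lambda>x. B * F x) S $$ (i,j)"
    by (simp add: msumset_index ij)
qed (use B in auto)

lemma msumset_mult: assumes W: "W \<in> carrier_mat k k" and F: "\<And>x. x \<in> S \<Longrightarrow> F x \<in> carrier_mat k k"
  shows "msumset k F S * W = msumset k (\<lambda>x. F x * W) S"
proof (rule eq_matI)
  fix i j assume "i < dim_row (msumset k (\<lambda>x. F x * W) S)" "j < dim_col (msumset k (\<lambda>x. F x * W) S)"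
  then have ij: "i < k" "j < k" by auto
  have "(msumset k F S * W) $$ (i,j) = (\<Sum>l<k. (\<Sum>x\<in>S. F x $$ (i,l)) * W $$ (l,j))"
    using mult_index[OF msumset_carrier W ij] by (simp add: msumset_index ij)
  also have "\<dots> = (\<Sum>x\<in>S. \<Sum>l<k. F x $$ (i,l) * W $$ (l,j))"
    by (simp add: sum_distrib_right sum.swap[of _ "{..<k}"])
  also have "\<dots> = (\<Sum>x\<in>S. (F x * W) $$ (i,j))"
    by (rule sum.cong[OF refl]) (simp add: mult_index[OF F W ij])
  finally show "(msumset k F S * W) $$ (i,j) = msumset k (\<lambda>x. F x * W) S $$ (i,j)"
    by (simp add: msumset_index ij)
qed (use W in auto)

lemma pow_add_m: "A \<in> carrier_mat k k \<Longrightarrow> A ^\<^sub>m g * A ^\<^sub>m q = A ^\<^sub>m (g + q)"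
proof (induction q)
  case 0
  then show ?case by simp
next
  case (Suc q)
  have "A ^\<^sub>m g * A ^\<^sub>m Suc q = (A ^\<^sub>m g * A ^\<^sub>m q) * A"
    using Suc.prems by (simp add: assoc_mult_mat[of _ k k _ k _ k, symmetric])
  then show ?case using Suc by simp
qed

lemma mprod_const: "A \<in> carrier_mat k k \<Longrightarrow> mprod_desc k (\<lambda>_. A) g = A ^\<^sub>m g"
proof (induction g)
  case 0
  then show ?case by simp
next
  case (Suc g)
  have "A * A ^\<^sub>m g = A ^\<^sub>m 1 * A ^\<^sub>m g" using Suc.prems by simp
  also have "\<dots> = A ^\<^sub>m (Suc g)" using pow_add_m[OF Suc.prems, of 1 g] by simp
  finally show ?case using Suc by simp
qed

lemma mprod_split: "(\<And>s. F s \<in> carrier_mat k k) \<Longrightarrow>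
   mprod_desc k F (m + l) = mprod_desc k (\<lambda>i. F (m + i)) l * mprod_desc k F m"
proof (induction l)
  case 0
  then show ?case using mprod_carrier[of F k m] by simp
next
  case (Suc l)
  have c1: "mprod_desc k (\<lambda>i. F (m + i)) l \<in> carrier_mat k k" by (rule mprod_carrier) (use Suc.prems in simp)
  have c2: "mprod_desc k F m \<in> carrier_mat k k" by (rule mprod_carrier) (use Suc.prems in simp)
  show ?case using Suc assoc_mult_mat[OF Suc.prems c1 c2] by simp
qed

definition Injs :: "nat \<Rightarrow> nat \<Rightarrow> (nat \<Rightarrow> nat) set" where
  "Injs N p = {\<sigma>. inj_on \<sigma> {1..p} \<and> \<sigma> ` {1..p} \<subseteq> {1..N} \<and> (\<forall>i. i \<notin> {1..p} \<longrightarrow> \<sigma> i = i)}"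

lemma Injs_0: "Injs N 0 = {id}"
  by (auto simp: Injs_def)

lemma Injs_finite: "finite (Injs N p)"
proof -
  have "Injs N p \<subseteq> (\<lambda>f i. if i \<in> {1..p} then f i else i) ` (PiE {1..p} (\<lambda>_. {1..N}))"
  proof
    fix \<sigma> assume s: "\<sigma> \<in> Injs N p"
    show "\<sigma> \<in> (\<lambda>f i. if i \<in> {1..p} then f i else i) ` (PiE {1..p} (\<lambda>_. {1..N}))"
    proof (rule image_eqI[where x="restrict \<sigma> {1..p}"])
      show "\<sigma> = (\<lambda>i. if i \<in> {1..p} then restrict \<sigma> {1..p} i else i)"
        using s by (auto simp: Injs_def)
      show "restrict \<sigma> {1..p} \<in> PiE {1..p} (\<lambda>_. {1..N})"
        using s by (auto simp: Injs_def)
    qed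
  qed
  then show ?thesis by (rule finite_subset) (simp add: finite_PiE)
qed

lemma reindex_Injs:
  fixes H :: "(nat \<Rightarrow> nat) \<Rightarrow> complex"
  shows "(\<Sum>\<sigma>\<in>Injs N p. \<Sum>j\<in>{1..N} - \<sigma>`{1..p}. H (\<sigma>(Suc p := j))) = (\<Sum>\<sigma>'\<in>Injs N (Suc p). H \<sigma>')"
proof -
  let ?S = "SIGMA \<sigma>:Injs N p. {1..N} - \<sigma>`{1..p}"
  let ?f = "\<lambda>(\<sigma>, j). \<sigma>(Suc p := j)"
  have "(\<Sum>\<sigma>\<in>Injs N p. \<Sum>j\<in>{1..N} - \<sigma>`{1..p}. H (\<sigma>(Suc p := j))) = (\<Sum>z\<in>?S. H (?f z))"
    by (subst sum.Sigma) (auto simp: Injs_finite split_def)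
  also have "\<dots> = (\<Sum>\<sigma>'\<in>?f ` ?S. H \<sigma>')"
  proof (rule sum.reindex[symmetric, unfolded comp_def])
    show "inj_on ?f ?S"
    proof (rule inj_onI)
      fix z1 z2 assume z: "z1 \<in> ?S" "z2 \<in> ?S" "?f z1 = ?f z2"
      obtain \<sigma>1 j1 where 1: "z1 = (\<sigma>1, j1)" by (cases z1)
      obtain \<sigma>2 j2 where 2: "z2 = (\<sigma>2, j2)" by (cases z2)
      have e: "\<sigma>1(Suc p := j1) = \<sigma>2(Suc p := j2)" using z 1 2 by simp
      have "j1 = j2" using fun_cong[OF e, of "Suc p"] by simp
      moreover have "\<sigma>1 = \<sigma>2"
      proof
        fix i show "\<sigma>1 i = \<sigma>2 i"
        proof (cases "i = Suc p")
          case True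
          then show ?thesis using z 1 2 by (auto simp: Injs_def)
        next
          case False
          then show ?thesis using fun_cong[OF e, of i] by simp
        qed
      qed
      ultimately show "z1 = z2" using 1 2 by simp
    qed
  qed
  also have "?f ` ?S = Injs N (Suc p)"
  proof
    show "?f ` ?S \<subseteq> Injs N (Suc p)"
    proof
      fix \<sigma>' assume "\<sigma>' \<in> ?f ` ?S"
      then obtain \<sigma> j where s: "\<sigma> \<in> Injs N p" and j: "j \<in> {1..N}" "j \<notin> \<sigma>`{1..p}" and e: "\<sigma>' = \<sigma>(Suc p := j)"
        by auto
      have a: "{1..Suc p} = insert (Suc p) {1..p}" by auto
      have "inj_on \<sigma>' {1..p} = inj_on \<sigma> {1..p}" unfolding e by (rule inj_on_cong) auto
      then have i1: "inj_on \<sigma>' {1..p}" using s unfolding Injs_def by simp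
      have i2: "\<sigma>' ` {1..p} = \<sigma> ` {1..p}" unfolding e by (rule image_cong) auto
      have "inj_on \<sigma>' {1..Suc p}" unfolding a using i1 i2 j e by (simp add: inj_on_insert)
      moreover have "\<sigma>' ` {1..Suc p} \<subseteq> {1..N}" unfolding a e using s j by (auto simp: Injs_def)
      moreover have "\<forall>i. i \<notin> {1..Suc p} \<longrightarrow> \<sigma>' i = i" using s unfolding e by (auto simp: Injs_def)
      ultimately show "\<sigma>' \<in> Injs N (Suc p)" by (simp add: Injs_def)
    qed
  next
    show "Injs N (Suc p) \<subseteq> ?f ` ?S"
    proof
      fix \<sigma>' assume s: "\<sigma>' \<in> Injs N (Suc p)"
      define \<sigma> where "\<sigma> = \<sigma>'(Suc p := Suc p)"
      have a: "{1..Suc p} = insert (Suc p) {1..p}" by auto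
      have "\<sigma> \<in> Injs N p"
      proof -
        have "inj_on \<sigma> {1..p}"
        proof -
          have sub: "{1..p} \<subseteq> {1..Suc p}" by auto
          have "inj_on \<sigma>' {1..p}" using s inj_on_subset[OF _ sub] unfolding Injs_def by blast
          moreover have "inj_on \<sigma> {1..p} = inj_on \<sigma>' {1..p}" unfolding \<sigma>_def by (rule inj_on_cong) auto
          ultimately show "inj_on \<sigma> {1..p}" by simp
        qed
        moreover have "\<sigma> ` {1..p} \<subseteq> {1..N}" using s unfolding \<sigma>_def Injs_def a by auto
        moreover have "\<forall>i. i \<notin> {1..p} \<longrightarrow> \<sigma> i = i" using s unfolding \<sigma>_def Injs_def by auto
        ultimately show ?thesis by (simp add: Injs_def)
      qed
      moreover have "\<sigma>' (Suc p) \<in> {1..N} - \<sigma>`{1..p}"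
      proof -
        have i: "inj_on \<sigma>' (insert (Suc p) {1..p})" using s unfolding Injs_def a by simp
        have "\<sigma>`{1..p} = \<sigma>'`{1..p}" unfolding \<sigma>_def by (rule image_cong) auto
        moreover have "\<sigma>' (Suc p) \<notin> \<sigma>'`{1..p}" using i by (simp add: inj_on_insert)
        moreover have "\<sigma>' (Suc p) \<in> {1..N}" using s unfolding Injs_def by (auto simp: image_subset_iff)
        ultimately show ?thesis by simp
      qed
      moreover have "\<sigma>' = \<sigma>(Suc p := \<sigma>' (Suc p))" unfolding \<sigma>_def by simp
      ultimately show "\<sigma>' \<in> ?f ` ?S" by (auto intro!: image_eqI[where x="(\<sigma>, \<sigma>' (Suc p))"])
    qed
  qed
  finally show ?thesis .
qed


lemma (in comm_sys) PS_empty: "PS {} m = 1\<^sub>m n"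
  by (induction m) (simp_all add: PS_def)

lemma msumset_single: "F a \<in> carrier_mat k k \<Longrightarrow> msumset k F {a} = F a"
  by (rule eq_matI) (auto simp: msumset_index)

locale part = comm_sys +
  fixes x :: "nat \<Rightarrow> nat" and gi :: "nat \<Rightarrow> nat \<Rightarrow> complex"
  assumes rnz: "\<And>j. j \<in> {1..N} \<Longrightarrow> r j \<noteq> 0"
    and s_eq: "\<And>j k. s j k = r j * (1/r k) * gi j k"
    and xmono: "\<And>j k. j \<in> {1..N} \<Longrightarrow> k \<in> {1..N} \<Longrightarrow> j < k \<Longrightarrow> x j < x k"
    and x1: "1 \<le> x 1"
begin

definition Cf where "Cf = msumset n Cj {1..N}"
definition SP where "SP m = mprod_desc n (\<lambda>q. if q \<in> x`{1..N} then Cf else A) m"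
definition xx where "xx p = (if p = 0 then 0 else x p)"

lemma x_ge: "q \<in> {1..N} \<Longrightarrow> q \<le> x q"
proof (induction q)
  case 0
  then show ?case by simp
next
  case (Suc q)
  show ?case
  proof (cases "q = 0")
    case True
    then show ?thesis using x1 by simp
  next
    case False
    then have "q \<in> {1..N}" using Suc.prems by simp
    then have "q \<le> x q" "x q < x (Suc q)" using Suc xmono[of q "Suc q"] by auto
    then show ?thesis by simp
  qed
qed

lemma xx_ge: "p \<le> N \<Longrightarrow> p \<le> xx p"
  using x_ge[of p] by (auto simp: xx_def)

lemma xx_lt: "Suc p \<le> N \<Longrightarrow> xx p < x (Suc p)"
  using x_ge[of "Suc p"] xmono[of p "Suc p"] by (auto simp: xx_def)

lemma notin_gap: assumes "Suc p \<le> N" "xx p < q" "q < x (Suc p)" shows "q \<notin> x`{1..N}"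
proof
  assume "q \<in> x`{1..N}"
  then obtain k where k: "k \<in> {1..N}" "q = x k" by auto
  show False
  proof (cases "k \<le> p")
    case True
    then have "p \<noteq> 0" using k by auto
    then have "x k \<le> x p" using True k assms xmono[of k p] by (cases "k = p") auto
    then show False using assms k \<open>p \<noteq> 0\<close> by (simp add: xx_def)
  next
    case False
    then have "x (Suc p) \<le> x k" using k assms xmono[of "Suc p" k] by (cases "k = Suc p") auto
    then show False using assms k by simp
  qed
qed

lemma notin_top: assumes "x N < q" shows "q \<notin> x`{1..N}"
proof
  assume "q \<in> x`{1..N}"
  then obtain k where k: "k \<in> {1..N}" "q = x k" by auto
  then have "x k \<le> x N" using xmono[of k N] by (cases "k = N") auto
  then show False using assms k by simp
qed

lemma Cf_c: "Cf \<in> carrier_mat n n" by (simp add: Cf_def)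

lemma F_c: "(if q \<in> x`{1..N} then Cf else A) \<in> carrier_mat n n"
  using Cf_c Ac by simp

lemma SP_c: "SP m \<in> carrier_mat n n"
  unfolding SP_def by (rule mprod_carrier[OF F_c])

lemma Cj_PS: assumes j: "j \<in> {1..N}" and S: "S \<subseteq> {1..N}"
  shows "Cj j * (A ^\<^sub>m G * PS S N) = (if j \<in> S then 0\<^sub>m n n
     else (r j ^ G * (\<Prod>k\<in>{k\<in>S. j < k}. s j k)) \<cdot>\<^sub>m (A ^\<^sub>m G * PS (insert j S) N))"
proof -
  have C: "Cj j \<in> carrier_mat n n" using Cc[OF j] .
  have P: "PS S N \<in> carrier_mat n n" by (rule PS_carrier) simp
  have P': "PS (insert j S) N \<in> carrier_mat n n" by (rule PS_carrier) simp
  have "Cj j * (A ^\<^sub>m G * PS S N) = (Cj j * A ^\<^sub>m G) * PS S N"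
    using assoc_mult_mat[OF C Apow_c P] by simp
  also have "\<dots> = r j ^ G \<cdot>\<^sub>m (A ^\<^sub>m G * (Cj j * PS S N))"
    unfolding CApow[OF j] using mult_smult_assoc_mat[OF mult_carrier_mat[OF Apow_c C] P]
      assoc_mult_mat[OF Apow_c C P] by simp
  finally have e: "Cj j * (A ^\<^sub>m G * PS S N) = r j ^ G \<cdot>\<^sub>m (A ^\<^sub>m G * (Cj j * PS S N))" .
  show ?thesis
  proof (cases "j \<in> S")
    case True
    have j1: "1 \<le> j" "j \<le> N" using j by auto
    show ?thesis unfolding e PS_zero[OF True j1 order.refl] using True Apow_c[of G] Ac by simp
  next
    case False
    have ee: "{k\<in>S. j < k \<and> k \<le> N} = {k\<in>S. j < k}" using S by auto
    have j1: "1 \<le> j" "j \<le> N" using j by auto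
    show ?thesis using False unfolding e PS_ins[OF False j1 order.refl] ee using j
      using mult_smult_distrib[OF Apow_c P'] by (simp add: smult_smult_m)
  qed
qed

lemma img_sub: "\<sigma> \<in> Injs N p \<Longrightarrow> \<sigma>`{1..p} \<subseteq> {1..N}"
  by (simp add: Injs_def)

lemma SP_formula: "p \<le> N \<Longrightarrow> SP (xx p) = msumset n (\<lambda>\<sigma>. Tf r gi x p \<sigma> \<cdot>\<^sub>m (A ^\<^sub>m (xx p - p) * PS (\<sigma>`{1..p}) N)) (Injs N p)"
proof (induction p)
  case 0
  have I0: "Inv 0 id = {}" unfolding Inv_def by auto
  have T0: "Tf r gi x 0 id = 1" by (simp add: Tf_def I0)
  have "A ^\<^sub>m 0 * PS {} N = 1\<^sub>m n" using Ac by (simp add: PS_empty)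
  then have "msumset n (\<lambda>\<sigma>. Tf r gi x 0 \<sigma> \<cdot>\<^sub>m (A ^\<^sub>m (xx 0 - 0) * PS (\<sigma>`{1..0}) N)) (Injs N 0) = 1\<^sub>m n"
    unfolding Injs_0 using T0 by (subst msumset_single) (auto simp: xx_def one_smult_m)
  then show ?case by (simp add: SP_def xx_def)
next
  case (Suc p)
  have sp: "Suc p \<le> N" using Suc.prems .
  have IH: "SP (xx p) = msumset n (\<lambda>\<sigma>. Tf r gi x p \<sigma> \<cdot>\<^sub>m (A ^\<^sub>m (xx p - p) * PS (\<sigma>`{1..p}) N)) (Injs N p)"
    using Suc sp by simp
  define X where "X = x (Suc p)"
  define xp where "xp = xx p"
  define g where "g = X - xp - 1"
  define G where "G = X - Suc p"
  define q where "q = xp - p"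
  have lt: "xp < X" unfolding xp_def X_def using xx_lt[OF sp] .
  have ge: "p \<le> xp" unfolding xp_def using xx_ge[of p] sp by simp
  have Xe: "X = xp + Suc g" using lt unfolding g_def by simp
  have Ge: "g + q = G" using lt ge unfolding g_def q_def G_def by simp
  define F where "F = (\<lambda>q. if q \<in> x`{1..N} then Cf else A)"
  have Fc: "F i \<in> carrier_mat n n" for i unfolding F_def using F_c .
  have XN: "Suc p \<in> {1..N}" using sp by simp
  have "mprod_desc n (\<lambda>i. F (xp + i)) g = mprod_desc n (\<lambda>_. A) g"
  proof (rule mprod_cong)
    fix i assume "1 \<le> i" "i \<le> g"
    then have "xx p < xp + i" "xp + i < x (Suc p)" using lt unfolding g_def xp_def X_def by auto
    then show "F (xp + i) = A" unfolding F_def using notin_gap[OF sp] by auto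
  qed
  also have "\<dots> = A ^\<^sub>m g" by (rule mprod_const[OF Ac])
  finally have mg: "mprod_desc n (\<lambda>i. F (xp + i)) g = A ^\<^sub>m g" .
  have FX: "F (xp + Suc g) = Cf" unfolding F_def Xe[symmetric] X_def using XN by auto
  have "SP X = mprod_desc n (\<lambda>i. F (xp + i)) (Suc g) * SP xp"
    unfolding SP_def F_def[symmetric] Xe by (rule mprod_split[OF Fc])
  also have "\<dots> = (Cf * A ^\<^sub>m g) * SP xp" using mg FX by simp
  finally have SPX: "SP X = (Cf * A ^\<^sub>m g) * SP xp" .
  define Mt where "Mt \<sigma> = Tf r gi x p \<sigma> \<cdot>\<^sub>m (A ^\<^sub>m q * PS (\<sigma>`{1..p}) N)" for \<sigma>
  have PSc: "PS S N \<in> carrier_mat n n" for S by (rule PS_carrier) simp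
  have Mtc: "Mt \<sigma> \<in> carrier_mat n n" for \<sigma> unfolding Mt_def by (rule smult_carrier_mat[OF mult_carrier_mat[OF Apow_c PSc]])
  have Am: "A ^\<^sub>m g * Mt \<sigma> = Tf r gi x p \<sigma> \<cdot>\<^sub>m (A ^\<^sub>m G * PS (\<sigma>`{1..p}) N)" for \<sigma>
  proof -
    have "A ^\<^sub>m g * Mt \<sigma> = Tf r gi x p \<sigma> \<cdot>\<^sub>m (A ^\<^sub>m g * (A ^\<^sub>m q * PS (\<sigma>`{1..p}) N))"
      unfolding Mt_def by (rule mult_smult_distrib[OF Apow_c mult_carrier_mat[OF Apow_c PSc]])
    also have "A ^\<^sub>m g * (A ^\<^sub>m q * PS (\<sigma>`{1..p}) N) = (A ^\<^sub>m g * A ^\<^sub>m q) * PS (\<sigma>`{1..p}) N"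
      by (rule assoc_mult_mat[OF Apow_c Apow_c PSc, symmetric])
    also have "\<dots> = A ^\<^sub>m G * PS (\<sigma>`{1..p}) N"
      unfolding pow_add_m[OF Ac] Ge ..
    finally show ?thesis .
  qed
  have Z: "SP X = msumset n (\<lambda>\<sigma>. Tf r gi x p \<sigma> \<cdot>\<^sub>m (Cf * (A ^\<^sub>m G * PS (\<sigma>`{1..p}) N))) (Injs N p)"
  proof -
    have IH': "SP xp = msumset n Mt (Injs N p)" unfolding Mt_def q_def xp_def using IH by simp
    have "SP X = Cf * (A ^\<^sub>m g * msumset n Mt (Injs N p))"
      unfolding SPX IH' by (rule assoc_mult_mat[OF Cf_c Apow_c msumset_carrier])
    also have "\<dots> = Cf * msumset n (\<lambda>\<sigma>. A ^\<^sub>m g * Mt \<sigma>) (Injs N p)"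
      by (subst mult_msumset[OF Apow_c Mtc]) rule
    also have "\<dots> = msumset n (\<lambda>\<sigma>. Cf * (A ^\<^sub>m g * Mt \<sigma>)) (Injs N p)"
      by (rule mult_msumset[OF Cf_c mult_carrier_mat[OF Apow_c Mtc]])
    also have "\<dots> = msumset n (\<lambda>\<sigma>. Tf r gi x p \<sigma> \<cdot>\<^sub>m (Cf * (A ^\<^sub>m G * PS (\<sigma>`{1..p}) N))) (Injs N p)"
      unfolding Am using mult_smult_distrib[OF Cf_c mult_carrier_mat[OF Apow_c PSc]] by simp
    finally show ?thesis .
  qed
  show ?case
  proof (rule eq_matI)
    fix i i' assume "i < dim_row (msumset n (\<lambda>\<sigma>. Tf r gi x (Suc p) \<sigma> \<cdot>\<^sub>m (A ^\<^sub>m (xx (Suc p) - Suc p) * PS (\<sigma>`{1..Suc p}) N)) (Injs N (Suc p)))"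
      "i' < dim_col (msumset n (\<lambda>\<sigma>. Tf r gi x (Suc p) \<sigma> \<cdot>\<^sub>m (A ^\<^sub>m (xx (Suc p) - Suc p) * PS (\<sigma>`{1..Suc p}) N)) (Injs N (Suc p)))"
    then have ii: "i < n" "i' < n" by auto
    define E where "E S = (A ^\<^sub>m G * PS S N) $$ (i,i')" for S
    have xxS: "xx (Suc p) - Suc p = G" unfolding xx_def G_def X_def by simp
    have inner: "(Cf * (A ^\<^sub>m G * PS S N)) $$ (i,i') = (\<Sum>j\<in>{1..N} - S. (r j ^ G * (\<Prod>k\<in>{k\<in>S. j < k}. s j k)) * E (insert j S))"
      if S: "S \<subseteq> {1..N}" for S
    proof -
      have "(Cf * (A ^\<^sub>m G * PS S N)) $$ (i,i') = (\<Sum>j\<in>{1..N}. (Cj j * (A ^\<^sub>m G * PS S N)) $$ (i,i'))"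
      proof -
        have ms: "msumset n Cj {1..N} * (A ^\<^sub>m G * PS S N) = msumset n (\<lambda>j. Cj j * (A ^\<^sub>m G * PS S N)) {1..N}"
          by (rule msumset_mult[OF mult_carrier_mat[OF Apow_c PSc] Cc])
        show ?thesis unfolding Cf_def ms using ii by (simp add: msumset_index)
      qed
      also have "\<dots> = (\<Sum>j\<in>{1..N}. if j \<in> S then 0 else (r j ^ G * (\<Prod>k\<in>{k\<in>S. j < k}. s j k)) * E (insert j S))"
      proof (rule sum.cong[OF refl])
        fix j assume j: "j \<in> {1..N}"
        show "(Cj j * (A ^\<^sub>m G * PS S N)) $$ (i,i') = (if j \<in> S then 0 else (r j ^ G * (\<Prod>k\<in>{k\<in>S. j < k}. s j k)) * E (insert j S))"
          unfolding Cj_PS[OF j S] E_def using ii carrier_matD[OF Ac] carrier_matD[OF PSc[of "insert j S"]] by auto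
      qed
      also have "\<dots> = (\<Sum>j\<in>{1..N} - S. (r j ^ G * (\<Prod>k\<in>{k\<in>S. j < k}. s j k)) * E (insert j S))"
        by (subst sum.If_cases) (auto simp: Diff_eq)
      finally show ?thesis .
    qed
    have xxX: "xx (Suc p) = X" unfolding xx_def X_def by simp
    have dPS: "dim_row (PS S N) = n" "dim_col (PS S N) = n" for S using PSc[of S] by auto
    have "SP (xx (Suc p)) $$ (i,i') = (\<Sum>\<sigma>\<in>Injs N p. Tf r gi x p \<sigma> * (Cf * (A ^\<^sub>m G * PS (\<sigma>`{1..p}) N)) $$ (i,i'))"
      unfolding xxX Z using ii carrier_matD[OF Cf_c] dPS by (simp add: msumset_index)
    also have "\<dots> = (\<Sum>\<sigma>\<in>Injs N p. \<Sum>j\<in>{1..N} - \<sigma>`{1..p}.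
        Tf r gi x (Suc p) (\<sigma>(Suc p := j)) * E ((\<sigma>(Suc p := j))`{1..Suc p}))"
    proof (rule sum.cong[OF refl])
      fix \<sigma> assume s: "\<sigma> \<in> Injs N p"
      have S: "\<sigma>`{1..p} \<subseteq> {1..N}" using img_sub[OF s] .
      have inj: "inj_on \<sigma> {1..p}" using s by (simp add: Injs_def)
      show "Tf r gi x p \<sigma> * (Cf * (A ^\<^sub>m G * PS (\<sigma>`{1..p}) N)) $$ (i,i') = (\<Sum>j\<in>{1..N} - \<sigma>`{1..p}.
        Tf r gi x (Suc p) (\<sigma>(Suc p := j)) * E ((\<sigma>(Suc p := j))`{1..Suc p}))"
        unfolding inner[OF S] sum_distrib_left
      proof (rule sum.cong[OF refl])
        fix j assume j: "j \<in> {1..N} - \<sigma>`{1..p}"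
        have im: "(\<sigma>(Suc p := j))`{1..Suc p} = insert j (\<sigma>`{1..p})"
        proof -
          have a: "{1..Suc p} = insert (Suc p) {1..p}" by auto
          have b: "(\<sigma>(Suc p := j))`{1..p} = \<sigma>`{1..p}" by (rule image_cong) auto
          show ?thesis unfolding a image_insert b by simp
        qed
        have TS: "Tf r gi x (Suc p) (\<sigma>(Suc p := j)) = Tf r gi x p \<sigma> * r j ^ (x (Suc p) - Suc p)
           * (\<Prod>k\<in>{k\<in>\<sigma>`{1..p}. j < k}. r j * (1/r k) * gi j k)"
        proof -
          have jN: "j \<in> {1..N}" and jn: "j \<notin> \<sigma>`{1..p}" using j by auto
          show ?thesis using T_step[where r=r and x=x and gi=gi, OF inj jn rnz[OF jN] x_ge[OF XN]] .
        qed
        show "Tf r gi x p \<sigma> * (r j ^ G * (\<Prod>k\<in>{k\<in>\<sigma>`{1..p}. j < k}. s j k) * E (insert j (\<sigma>`{1..p})))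
           = Tf r gi x (Suc p) (\<sigma>(Suc p := j)) * E ((\<sigma>(Suc p := j))`{1..Suc p})"
          unfolding im TS G_def X_def s_eq by (simp add: mult_ac)
      qed
    qed
    also have "\<dots> = (\<Sum>\<sigma>'\<in>Injs N (Suc p). Tf r gi x (Suc p) \<sigma>' * E (\<sigma>'`{1..Suc p}))"
      by (rule reindex_Injs)
    also have "\<dots> = msumset n (\<lambda>\<sigma>. Tf r gi x (Suc p) \<sigma> \<cdot>\<^sub>m (A ^\<^sub>m (xx (Suc p) - Suc p) * PS (\<sigma>`{1..Suc p}) N)) (Injs N (Suc p)) $$ (i,i')"
      unfolding xxS E_def using ii carrier_matD[OF Ac] dPS by (simp add: msumset_index)
    finally show "SP (xx (Suc p)) $$ (i,i') = msumset n (\<lambda>\<sigma>. Tf r gi x (Suc p) \<sigma> \<cdot>\<^sub>m (A ^\<^sub>m (xx (Suc p) - Suc p) * PS (\<sigma>`{1..Suc p}) N)) (Injs N (Suc p)) $$ (i,i')" .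
  next
    show "dim_row (SP (xx (Suc p))) = dim_row (msumset n (\<lambda>\<sigma>. Tf r gi x (Suc p) \<sigma> \<cdot>\<^sub>m (A ^\<^sub>m (xx (Suc p) - Suc p) * PS (\<sigma>`{1..Suc p}) N)) (Injs N (Suc p)))"
      using SP_c[of "xx (Suc p)"] by simp
    show "dim_col (SP (xx (Suc p))) = dim_col (msumset n (\<lambda>\<sigma>. Tf r gi x (Suc p) \<sigma> \<cdot>\<^sub>m (A ^\<^sub>m (xx (Suc p) - Suc p) * PS (\<sigma>`{1..Suc p}) N)) (Injs N (Suc p)))"
      using SP_c[of "xx (Suc p)"] by simp
  qed
qed

end



lemma msum_eq: "(\<And>j. j \<in> {1..m} \<Longrightarrow> F j \<in> carrier_mat k k) \<Longrightarrow> msum k F m = msumset k F {1..m}"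
proof (induction m)
  case 0
  show ?case by (rule eq_matI) (auto simp: msumset_index)
next
  case (Suc m)
  have IH: "msum k F m = msumset k F {1..m}" using Suc by simp
  have c: "F (Suc m) \<in> carrier_mat k k" using Suc.prems by simp
  show ?case
  proof (rule eq_matI)
    fix i j assume "i < dim_row (msumset k F {1..Suc m})" "j < dim_col (msumset k F {1..Suc m})"
    then have ij: "i < k" "j < k" by auto
    have "msum k F (Suc m) $$ (i,j) = F (Suc m) $$ (i,j) + (\<Sum>x\<in>{1..m}. F x $$ (i,j))"
      using ij by (simp add: IH msumset_index)
    also have "\<dots> = (\<Sum>x\<in>{1..Suc m}. F x $$ (i,j))"
      by (simp add: sum.cl_ivl_Suc add.commute)
    finally show "msum k F (Suc m) $$ (i,j) = msumset k F {1..Suc m} $$ (i,j)"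
      using ij by (simp add: msumset_index)
  qed (simp_all add: IH)
qed

lemma msumset_cong: assumes "\<And>\<sigma>. \<sigma> \<in> S \<Longrightarrow> F \<sigma> = G \<sigma>" shows "msumset k F S = msumset k G S"
proof -
  have "\<And>i j. (\<Sum>x\<in>S. F x $$ (i,j)) = (\<Sum>x\<in>S. G x $$ (i,j))" using assms by (intro sum.cong) auto
  then show ?thesis by (simp add: msumset_def)
qed

lemma Injs_perm: "Injs N N = {\<sigma>. \<sigma> permutes {1..N}}"
proof
  show "Injs N N \<subseteq> {\<sigma>. \<sigma> permutes {1..N}}"
  proof
    fix \<sigma> assume s: "\<sigma> \<in> Injs N N"
    have im: "\<sigma> ` {1..N} = {1..N}" using s by (intro endo_inj_surj) (auto simp: Injs_def)
    have "bij_betw \<sigma> {1..N} {1..N}" using s im by (simp add: bij_betw_def Injs_def)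
    then show "\<sigma> \<in> {\<sigma>. \<sigma> permutes {1..N}}" using s by (auto intro: bij_imp_permutes simp: Injs_def)
  qed
next
  show "{\<sigma>. \<sigma> permutes {1..N}} \<subseteq> Injs N N"
  proof
    fix \<sigma> assume "\<sigma> \<in> {\<sigma>. \<sigma> permutes {1..N}}"
    then have p: "\<sigma> permutes {1..N}" by simp
    show "\<sigma> \<in> Injs N N"
      unfolding Injs_def using permutes_inj_on[OF p] permutes_image[OF p] permutes_not_in[OF p] by auto
  qed
qed

lemma Injs_img: "\<sigma> \<in> Injs N N \<Longrightarrow> \<sigma> ` {1..N} = {1..N}"
  by (intro endo_inj_surj) (auto simp: Injs_def)

lemma cfg_configs: "cfg M X \<in> configs M"
  by (auto simp: cfg_def configs_def)

theorem mainTheorem3: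
  fixes t a b c d e f :: complex and M N :: nat and u :: "nat \<Rightarrow> complex"
    and Cj :: "nat \<Rightarrow> complex mat" and x :: "nat \<Rightarrow> nat"
  assumes nz: "t \<noteq> 0" "a \<noteq> 0" "b \<noteq> 0" "c \<noteq> 0" "d \<noteq> 0" "e \<noteq> 0" "f \<noteq> 0"
    and t1: "t \<noteq> 1"
    and rel1: "c * d + a * f = 0" and rel2: "t * c * d + b * e = 0"
    and NM: "1 \<le> N" "N \<le> M"
    and distinct: "\<And>j k. j \<in> {1..N} \<Longrightarrow> k \<in> {1..N} \<Longrightarrow> j \<noteq> k \<Longrightarrow> u j \<noteq> u k"
    and nza: "\<And>j. j \<in> {1..N} \<Longrightarrow> a * u j + b \<noteq> 0"
    and nze: "\<And>j. j \<in> {1..N} \<Longrightarrow> e * u j + f \<noteq> 0"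
    and tu: "\<And>j k. j \<in> {1..N} \<Longrightarrow> k \<in> {1..N} \<Longrightarrow> j \<noteq> k \<Longrightarrow> t * u j \<noteq> u k"
    and Cdim: "\<And>j. j \<in> {1..N} \<Longrightarrow> Cj j \<in> carrier_mat (2 ^ N) (2 ^ N)"
    and Csum: "msum (2 ^ N) Cj N = snd (AC t a b c d e f u N)"
    and CA: "\<And>j. j \<in> {1..N} \<Longrightarrow>
       Cj j * fst (AC t a b c d e f u N)
         = ((e * u j + f) / (a * u j + b)) \<cdot>\<^sub>m (fst (AC t a b c d e f u N) * Cj j)"
    and Csq: "\<And>j. j \<in> {1..N} \<Longrightarrow> Cj j * Cj j = 0\<^sub>m (2 ^ N) (2 ^ N)"
    and CC: "\<And>j k. j \<in> {1..N} \<Longrightarrow> k \<in> {1..N} \<Longrightarrow> j \<noteq> k \<Longrightarrow>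
       Cj j * Cj k
         = (((e * u j + f) * (a * u k + b) * (u j - t * u k))
             / ((a * u j + b) * (e * u k + f) * (t * u j - u k))) \<cdot>\<^sub>m (Cj k * Cj j)"
    and x_mono: "\<And>j k. j \<in> {1..N} \<Longrightarrow> k \<in> {1..N} \<Longrightarrow> j < k \<Longrightarrow> x j < x k"
    and x_range: "1 \<le> x 1" "x N \<le> M"
  shows "Bstate t a b c d e f M u N (cfg M (x ` {1..N}))
    = ((\<Prod>j = 1..N. ((a * u j + b) / (e * u j + f)) ^ j)
        * mtrace (Qmat N * (fst (AC t a b c d e f u N) ^\<^sub>m (M - N)) * mprod_desc (2 ^ N) Cj N))
      * (\<Sum>\<sigma> | \<sigma> permutes {1..N}.
           (\<Prod>(j, k) \<in> Inv N \<sigma>. (u (\<sigma> k) - t * u (\<sigma> j)) / (t * u (\<sigma> k) - u (\<sigma> j)))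
           * (\<Prod>j = 1..N. ((e * u (\<sigma> j) + f) / (a * u (\<sigma> j) + b)) ^ x j))"
proof -
  define n2 where "n2 = (2::nat) ^ N"
  define A where "A = fst (AC t a b c d e f u N)"
  define C where "C = snd (AC t a b c d e f u N)"
  define r where "r j = (e * u j + f) / (a * u j + b)" for j
  define s where "s j k = ((e * u j + f) * (a * u k + b) * (u j - t * u k))
             / ((a * u j + b) * (e * u k + f) * (t * u j - u k))" for j k
  define gi where "gi j k = (u j - t * u k) / (t * u j - u k)" for j k
  have Ac: "A \<in> carrier_mat n2 n2" unfolding A_def n2_def using AC_carrier by blast
  have Cc: "C \<in> carrier_mat n2 n2" unfolding C_def n2_def using AC_carrier by blast
  interpret part n2 N A Cj r s x gi
  proof
    show "A \<in> carrier_mat n2 n2" by (rule Ac)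
    show "\<And>j. j \<in> {1..N} \<Longrightarrow> Cj j \<in> carrier_mat n2 n2" unfolding n2_def by (rule Cdim)
    show "\<And>j. j \<in> {1..N} \<Longrightarrow> Cj j * A = r j \<cdot>\<^sub>m (A * Cj j)" unfolding A_def r_def by (rule CA)
    show "\<And>j. j \<in> {1..N} \<Longrightarrow> Cj j * Cj j = 0\<^sub>m n2 n2" unfolding n2_def by (rule Csq)
    show "\<And>j k. j \<in> {1..N} \<Longrightarrow> k \<in> {1..N} \<Longrightarrow> j \<noteq> k \<Longrightarrow> Cj j * Cj k = s j k \<cdot>\<^sub>m (Cj k * Cj j)"
      unfolding s_def by (rule CC)
    show "\<And>j. j \<in> {1..N} \<Longrightarrow> r j \<noteq> 0" unfolding r_def using nza nze by simp
    show "\<And>j k. s j k = r j * (1 / r k) * gi j k" unfolding s_def r_def gi_def by simp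
    show "\<And>j k. j \<in> {1..N} \<Longrightarrow> k \<in> {1..N} \<Longrightarrow> j < k \<Longrightarrow> x j < x k" by (rule x_mono)
    show "1 \<le> x 1" by (rule x_range)
  qed
  define X where "X = x ` {1..N}"
  define Y where "Y = mprod_desc n2 Cj N"
  have Yc: "Y \<in> carrier_mat n2 n2" unfolding Y_def by (rule mprod_carrier') (use Cdim n2_def in auto)
  have Cf_eq: "Cf = C"
  proof -
    have "msum n2 Cj N = msumset n2 Cj {1..N}" by (rule msum_eq) (use Cdim n2_def in auto)
    moreover have "msum n2 Cj N = C" using Csum unfolding C_def n2_def .
    ultimately show ?thesis unfolding Cf_def by simp
  qed
  have step1: "Bstate t a b c d e f M u N (cfg M X) = SP M $$ (0, n2 - 1)"
  proof -
    have "mprod_desc (2^N) (\<lambda>s. Xm t a b c d e f u N (cfg M X s)) M = SP M"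
      unfolding SP_def n2_def[symmetric]
    proof (rule mprod_cong)
      fix q assume "1 \<le> q" "q \<le> M"
      then show "Xm t a b c d e f u N (cfg M X q) = (if q \<in> x ` {1..N} then Cf else A)"
        by (simp add: cfg_def Xm_def A_def C_def Cf_eq X_def)
    qed
    then show ?thesis using mp_repr[OF cfg_configs, of t a b c d e f M u N X] by (simp add: n2_def)
  qed
  have xNN: "N \<le> x N" using x_ge[of N] NM by simp
  have step2: "SP M = A ^\<^sub>m (M - x N) * SP (x N)"
  proof -
    have Me: "M = x N + (M - x N)" using x_range by simp
    have "SP M = mprod_desc n2 (\<lambda>i. (\<lambda>q. if q \<in> x`{1..N} then Cf else A) (x N + i)) (M - x N) * SP (x N)"
      unfolding SP_def by (subst Me, rule mprod_split[OF F_c])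
    also have "mprod_desc n2 (\<lambda>i. (\<lambda>q. if q \<in> x`{1..N} then Cf else A) (x N + i)) (M - x N)
        = mprod_desc n2 (\<lambda>_. A) (M - x N)"
      by (rule mprod_cong) (use notin_top in auto)
    also have "\<dots> = A ^\<^sub>m (M - x N)" by (rule mprod_const[OF Ac])
    finally show ?thesis .
  qed
  have PSY: "PS (\<sigma>`{1..N}) N = Y" if "\<sigma> \<in> Injs N N" for \<sigma>
    unfolding PS_def Y_def Injs_img[OF that] by (rule mprod_cong) auto
  have step3: "SP (x N) = msumset n2 (\<lambda>\<sigma>. Tf r gi x N \<sigma> \<cdot>\<^sub>m (A ^\<^sub>m (x N - N) * Y)) (Injs N N)"
  proof -
    have "SP (x N) = SP (xx N)" using NM by (simp add: xx_def)
    also have "\<dots> = msumset n2 (\<lambda>\<sigma>. Tf r gi x N \<sigma> \<cdot>\<^sub>m (A ^\<^sub>m (xx N - N) * PS (\<sigma>`{1..N}) N)) (Injs N N)"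
      by (rule SP_formula) simp
    also have "\<dots> = msumset n2 (\<lambda>\<sigma>. Tf r gi x N \<sigma> \<cdot>\<^sub>m (A ^\<^sub>m (x N - N) * Y)) (Injs N N)"
    proof (rule msumset_cong)
      fix \<sigma> assume "\<sigma> \<in> Injs N N"
      then show "Tf r gi x N \<sigma> \<cdot>\<^sub>m (A ^\<^sub>m (xx N - N) * PS (\<sigma>`{1..N}) N) = Tf r gi x N \<sigma> \<cdot>\<^sub>m (A ^\<^sub>m (x N - N) * Y)"
        unfolding PSY[OF \<open>\<sigma> \<in> Injs N N\<close>] using NM by (simp add: xx_def)
    qed
    finally show ?thesis .
  qed
  have AY: "A ^\<^sub>m (M - x N) * (k \<cdot>\<^sub>m (A ^\<^sub>m (x N - N) * Y)) = k \<cdot>\<^sub>m (A ^\<^sub>m (M - N) * Y)" for k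
  proof -
    have "A ^\<^sub>m (M - x N) * (k \<cdot>\<^sub>m (A ^\<^sub>m (x N - N) * Y)) = k \<cdot>\<^sub>m (A ^\<^sub>m (M - x N) * (A ^\<^sub>m (x N - N) * Y))"
      by (rule mult_smult_distrib[OF Apow_c mult_carrier_mat[OF Apow_c Yc]])
    also have "A ^\<^sub>m (M - x N) * (A ^\<^sub>m (x N - N) * Y) = (A ^\<^sub>m (M - x N) * A ^\<^sub>m (x N - N)) * Y"
      by (rule assoc_mult_mat[OF Apow_c Apow_c Yc, symmetric])
    also have "\<dots> = A ^\<^sub>m (M - N) * Y"
      unfolding pow_add_m[OF Ac] using xNN x_range by simp
    finally show ?thesis .
  qed
  have Wc: "A ^\<^sub>m (M - N) * Y \<in> carrier_mat n2 n2" by (rule mult_carrier_mat[OF Apow_c Yc])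
  have n2p: "0 < n2" "n2 - 1 < n2" unfolding n2_def by simp_all
  define W where "W = (A ^\<^sub>m (M - N) * Y) $$ (0, n2 - 1)"
  have main: "Bstate t a b c d e f M u N (cfg M X) = (\<Sum>\<sigma>\<in>Injs N N. Tf r gi x N \<sigma> * W)"
  proof -
    have "SP M = msumset n2 (\<lambda>\<sigma>. A ^\<^sub>m (M - x N) * (Tf r gi x N \<sigma> \<cdot>\<^sub>m (A ^\<^sub>m (x N - N) * Y))) (Injs N N)"
      unfolding step2 step3 by (rule mult_msumset[OF Apow_c smult_carrier_mat[OF mult_carrier_mat[OF Apow_c Yc]]])
    then have "SP M = msumset n2 (\<lambda>\<sigma>. Tf r gi x N \<sigma> \<cdot>\<^sub>m (A ^\<^sub>m (M - N) * Y)) (Injs N N)"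
      unfolding AY .
    then show ?thesis unfolding step1 W_def using n2p carrier_matD[OF Wc] by (simp add: msumset_index)
  qed
  have trace: "mtrace (Qmat N * (A ^\<^sub>m (M - N)) * Y) = W"
  proof -
    have Q: "Qmat N \<in> carrier_mat n2 n2" by (simp add: Qmat_def n2_def)
    have "Qmat N * (A ^\<^sub>m (M - N)) * Y = Qmat N * (A ^\<^sub>m (M - N) * Y)"
      by (rule assoc_mult_mat[OF Q Apow_c Yc])
    then show ?thesis unfolding W_def using mtrace_Q[of "A ^\<^sub>m (M - N) * Y" N] Wc n2_def by simp
  qed
  have Tf_eq: "Tf r gi x N \<sigma> = (\<Prod>j = 1..N. ((a * u j + b) / (e * u j + f)) ^ j)
      * ((\<Prod>(j, k) \<in> Inv N \<sigma>. (u (\<sigma> k) - t * u (\<sigma> j)) / (t * u (\<sigma> k) - u (\<sigma> j)))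
           * (\<Prod>j = 1..N. ((e * u (\<sigma> j) + f) / (a * u (\<sigma> j) + b)) ^ x j))"
    if s: "\<sigma> \<in> Injs N N" for \<sigma>
  proof -
    have im: "\<sigma> ` {1..N} = {1..N}" by (rule Injs_img[OF s])
    have cd: "card {k\<in>{1..N}. k \<le> m} = m" if "m \<in> {1..N}" for m
    proof -
      have "{k\<in>{1..N}. k \<le> m} = {1..m}" using that by auto
      then show ?thesis by simp
    qed
    have R: "(\<Prod>m\<in>\<sigma>`{1..N}. (1/r m) ^ card {k\<in>\<sigma>`{1..N}. k \<le> m}) = (\<Prod>j = 1..N. ((a * u j + b) / (e * u j + f)) ^ j)"
      unfolding im
    proof (rule prod.cong[OF refl])
      fix m assume m: "m \<in> {1..N}"
      show "(1/r m) ^ card {k\<in>{1..N}. k \<le> m} = ((a * u m + b) / (e * u m + f)) ^ m"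
        unfolding cd[OF m] by (simp add: r_def)
    qed
    have G: "(\<Prod>(j,k)\<in>Inv N \<sigma>. gi (\<sigma> k) (\<sigma> j)) = (\<Prod>(j, k) \<in> Inv N \<sigma>. (u (\<sigma> k) - t * u (\<sigma> j)) / (t * u (\<sigma> k) - u (\<sigma> j)))"
      by (rule prod.cong[OF refl]) (auto simp: gi_def)
    have P: "(\<Prod>q\<in>{1..N}. r (\<sigma> q) ^ x q) = (\<Prod>j = 1..N. ((e * u (\<sigma> j) + f) / (a * u (\<sigma> j) + b)) ^ x j)"
      by (simp add: r_def)
    show ?thesis unfolding Tf_def R G P by (simp add: mult_ac)
  qed
  have trace': "mtrace (Qmat N * (fst (AC t a b c d e f u N) ^\<^sub>m (M - N)) * mprod_desc (2 ^ N) Cj N) = W"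
    using trace unfolding A_def Y_def n2_def .
  show ?thesis
    unfolding X_def[symmetric] main trace' Injs_perm[symmetric]
    by (simp add: Tf_eq sum_distrib_left mult_ac)
qed


end
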